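(* Let $F$ be a $p$-adic field of characteristic zero with residue characteristic $p\neq2$ and residue field of cardinality $q$, and let $n\in\mathbb{N}$ be coprime to $(q-1)q(q+1)$. Let $K$ be either $\mathrm{GL}_2(\mathcal{O}_F)$ or the Iwahori subgroup $\{\begin{pmatrix}a&b\\c&d\end{pmatrix}\in\mathrm{GL}_2(\mathcal{O}_F):\mathrm{ord}(b)>0\}$. Then for every regular semisimple $\gamma\in K$, $$d^+(\gamma)=d^+(\gamma^n)\quad\text{and}\quad D_{\mathrm{GL}_2}(\gamma)=D_{\mathrm{GL}_2}(\gamma^n).$$
   Context: $D_{\mathrm{GL}_2}(\gamma)=|\det(1-\mathrm{Ad}(\gamma))_{\mathfrak{gl}_2(F)/\mathfrak{gl}_2(F)_\gamma}|$ is the Weyl discriminant, with $|x|=q^{-\mathrm{ord}(x)}$. For $x$ in the Bruhat–Tits building $\mathcal{B}(\mathrm{GL}_2,F)$, $\{(\mathrm{GL}_2)_{x,r}\}_{r\ge0}$ is the Moy–Prasad filtration. For a regular semisimple $\gamma$ lying in a maximal torus with compact image modulo the center $Z$, its depth is $d(\gamma)=\max(\{0\}\cup\{r\ge0:\gamma\in(\mathrm{GL}_2)_{x,r}\text{ for some }x\in\mathcal{B}(\mathrm{GL}_2,F)\})$, and the maximal depth is $d^+(\gamma)=\max\{d(z\gamma):z\in Z(F)\}$. *)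

theory Defs
  imports "HOL-Analysis.Analysis"
begin

text \<open>The normalized discrete valuation ord is given as a function v on nonzero
elements; val extends it by val 0 = infinity.\<close>

definition val :: "('a::field \<Rightarrow> int) \<Rightarrow> 'a \<Rightarrow> ereal" where
  "val v x = (if x = 0 then \<infinity> else ereal (real_of_int (v x)))"

definition ring_of_integers :: "('a::field \<Rightarrow> int) \<Rightarrow> 'a set" where
  "ring_of_integers v = {x. val v x \<ge> 0}"

definition residue_field :: "('a::field \<Rightarrow> int) \<Rightarrow> 'a set set" where
  "residue_field v = ring_of_integers v //
     {(x, y). x \<in> ring_of_integers v \<and> y \<in> ring_of_integers v \<and> val v (x - y) > 0}"

definition padic_field :: "('a::field \<Rightarrow> int) \<Rightarrow> nat \<Rightarrow> nat \<Rightarrow> bool" where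
  "padic_field v p q \<longleftrightarrow>
     CHAR('a) = 0 \<and>
     (\<forall>x y. x \<noteq> 0 \<longrightarrow> y \<noteq> 0 \<longrightarrow> v (x * y) = v x + v y) \<and>
     (\<forall>x y. x \<noteq> 0 \<longrightarrow> y \<noteq> 0 \<longrightarrow> x + y \<noteq> 0 \<longrightarrow> v (x + y) \<ge> min (v x) (v y)) \<and>
     (\<exists>\<pi>::'a. \<pi> \<noteq> 0 \<and> v \<pi> = 1) \<and>
     (\<forall>X::nat \<Rightarrow> 'a.
        (\<forall>N::int. \<exists>M. \<forall>m\<ge>M. \<forall>n\<ge>M. ereal (real_of_int N) \<le> val v (X m - X n)) \<longrightarrow>
        (\<exists>L. \<forall>N::int. \<exists>M. \<forall>m\<ge>M. ereal (real_of_int N) \<le> val v (X m - L))) \<and>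
     prime p \<and> val v (of_nat p) > 0 \<and>
     finite (residue_field v) \<and> card (residue_field v) = q"

definition absv :: "('a::field \<Rightarrow> int) \<Rightarrow> nat \<Rightarrow> 'a \<Rightarrow> real" where
  "absv v q x = (if x = 0 then 0 else real q powr (- real_of_int (v x)))"

definition mtrace :: "'a::comm_ring_1^2^2 \<Rightarrow> 'a" where
  "mtrace g = g $ 1 $ 1 + g $ 2 $ 2"

definition mpow :: "'a::comm_ring_1^2^2 \<Rightarrow> nat \<Rightarrow> 'a^2^2" where
  "mpow g n = ((\<lambda>A. A ** g) ^^ n) (mat 1)"

definition GL2_O :: "('a::field \<Rightarrow> int) \<Rightarrow> ('a^2^2) set" where
  "GL2_O v = {g. (\<forall>i j. g $ i $ j \<in> ring_of_integers v) \<and> det g \<noteq> 0 \<and> val v (det g) = 0}"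

definition Iwahori :: "('a::field \<Rightarrow> int) \<Rightarrow> ('a^2^2) set" where
  "Iwahori v = {g \<in> GL2_O v. val v (g $ 1 $ 2) > 0}"

text \<open>Regular semisimple elements of GL_2(F): invertible with distinct eigenvalues
(in an algebraic closure), i.e. nonzero discriminant of the characteristic polynomial.\<close>
definition regular_semisimple :: "'a::field^2^2 \<Rightarrow> bool" where
  "regular_semisimple g \<longleftrightarrow> det g \<noteq> 0 \<and> (mtrace g)^2 - 4 * det g \<noteq> 0"

text \<open>Weyl discriminant: for eigenvalues l1, l2,
 |det(1 - Ad g) on gl2/gl2_g| = |(1 - l1/l2)(1 - l2/l1)| = |(tr^2 - 4 det)/det|.\<close>
definition weyl_disc :: "('a::field \<Rightarrow> int) \<Rightarrow> nat \<Rightarrow> 'a^2^2 \<Rightarrow> real" where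
  "weyl_disc v q g = absv v q (((mtrace g)^2 - 4 * det g) / det g)"

text \<open>Points of the (extended) Bruhat--Tits building of GL_2(F) are the splittable norms on F^2
(Goldman--Iwahori / Bruhat--Tits): given a basis (columns of B, det B nonzero) and reals a1, a2,
the norm of w = B x is min(val x1 + a1, val x2 + a2).\<close>
definition bnorm :: "('a::field \<Rightarrow> int) \<Rightarrow> real \<Rightarrow> real \<Rightarrow> 'a^2 \<Rightarrow> ereal" where
  "bnorm v a1 a2 x = min (val v (x $ 1) + ereal a1) (val v (x $ 2) + ereal a2)"

definition MP_filt :: "('a::field \<Rightarrow> int) \<Rightarrow> 'a^2^2 \<Rightarrow> real \<Rightarrow> real \<Rightarrow> real \<Rightarrow> ('a^2^2) set" where
  "MP_filt v B a1 a2 r = {g. det g \<noteq> 0 \<and>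
     (\<forall>x y. g *v (B *v x) = B *v y \<longrightarrow> bnorm v a1 a2 y = bnorm v a1 a2 x) \<and>
     (\<forall>x y. (g - mat 1) *v (B *v x) = B *v y \<longrightarrow> bnorm v a1 a2 y \<ge> bnorm v a1 a2 x + ereal r)}"

definition depth :: "('a::field \<Rightarrow> int) \<Rightarrow> 'a^2^2 \<Rightarrow> real" where
  "depth v g = Sup (insert 0 {r. r \<ge> 0 \<and>
      (\<exists>B a1 a2. det B \<noteq> 0 \<and> g \<in> MP_filt v B a1 a2 r)})"

definition max_depth :: "('a::field \<Rightarrow> int) \<Rightarrow> 'a^2^2 \<Rightarrow> real" where
  "max_depth v g = Sup {depth v (mat z ** g) | z. z \<noteq> 0}"

end

theory Submission
  imports Defs
begin

locale vfield =
  fixes v :: "'a::field \<Rightarrow> int"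
  assumes vmult: "\<And>x y. x \<noteq> 0 \<Longrightarrow> y \<noteq> 0 \<Longrightarrow> v (x * y) = v x + v y"
    and vadd: "\<And>x y. x \<noteq> 0 \<Longrightarrow> y \<noteq> 0 \<Longrightarrow> x + y \<noteq> 0 \<Longrightarrow> v (x + y) \<ge> min (v x) (v y)"
begin

abbreviation vl where "vl \<equiv> val v"
abbreviation cg (infix "\<equiv>\<^sub>m" 50) where "x \<equiv>\<^sub>m y \<equiv> val v (x - y) > 0"
abbreviation Ov where "Ov \<equiv> ring_of_integers v"

lemma v1: "v 1 = 0"
  using vmult[of 1 1] by simp

lemma vm1: "v (-1) = 0"
  using vmult[of "-1" "-1"] v1 by simp

lemma vminus: "x \<noteq> 0 \<Longrightarrow> v (-x) = v x"
  using vmult[of "-1" x] vm1 by simp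

lemma vinv: "x \<noteq> 0 \<Longrightarrow> v (inverse x) = - v x"
  using vmult[of x "inverse x"] v1 by simp

lemma val_nz: "x \<noteq> 0 \<Longrightarrow> val v x = ereal (v x)"
  by (simp add: val_def)

lemma val_0[simp]: "val v 0 = \<infinity>" by (simp add: val_def)

lemma val_neq_minf[simp]: "val v x \<noteq> -\<infinity>" by (simp add: val_def)

lemma val_mult: "val v (x * y) = val v x + val v y"
  by (simp add: val_def vmult)

lemma val_add: "val v (x + y) \<ge> min (val v x) (val v y)"
proof (cases "x = 0 \<or> y = 0 \<or> x + y = 0")
  case True then show ?thesis by (auto simp: val_def)
next
  case False
  then show ?thesis using vadd[of x y] by (auto simp: val_def min_def)
qed

lemma val_minus[simp]: "val v (- x) = val v x"
  by (cases "x = 0") (auto simp: val_def vminus)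

lemma val_diff_sym: "val v (x - y) = val v (y - x)"
  by (metis minus_diff_eq val_minus)

lemma val_diff: "val v (x - y) \<ge> min (val v x) (val v y)"
  using val_add[of x "-y"] by simp

lemma val_one[simp]: "val v 1 = 0" by (simp add: val_def v1)

lemma val_eq_inf_iff[simp]: "val v x = \<infinity> \<longleftrightarrow> x = 0" by (simp add: val_def)

lemma val_inverse: "x \<noteq> 0 \<Longrightarrow> val v (inverse x) = - val v x"
  by (auto simp: val_def vinv)

lemma val_add_strict: "val v x < val v y \<Longrightarrow> val v (x + y) = val v x"
proof -
  assume a: "val v x < val v y"
  have "val v (x+y) \<ge> val v x" using val_add[of x y] a by simp
  moreover have "val v x \<ge> min (val v (x+y)) (val v y)" using val_diff[of "x+y" y] by simp
  ultimately show ?thesis using a by (auto simp: min_def split: if_splits)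
qed

lemma v_power: "x \<noteq> 0 \<Longrightarrow> v (x ^ n) = int n * v x"
  by (induction n) (auto simp: vmult v1 algebra_simps)

lemma Ov_iff: "x \<in> Ov \<longleftrightarrow> val v x \<ge> 0" by (simp add: ring_of_integers_def)

lemma Ov_0[simp]: "0 \<in> Ov" and Ov_1[simp]: "1 \<in> Ov" by (auto simp: Ov_iff)

lemma Ov_mult: "x \<in> Ov \<Longrightarrow> y \<in> Ov \<Longrightarrow> x * y \<in> Ov"
  by (auto simp: Ov_iff val_mult)

lemma Ov_add: "x \<in> Ov \<Longrightarrow> y \<in> Ov \<Longrightarrow> x + y \<in> Ov"
  using val_add[of x y] by (auto simp: Ov_iff min_def split: if_splits)

lemma Ov_minus: "x \<in> Ov \<Longrightarrow> - x \<in> Ov" by (simp add: Ov_iff)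

lemma Ov_diff: "x \<in> Ov \<Longrightarrow> y \<in> Ov \<Longrightarrow> x - y \<in> Ov"
  using Ov_add[of x "-y"] Ov_minus by simp

lemma Ov_power: "x \<in> Ov \<Longrightarrow> x ^ n \<in> Ov"
  by (induction n) (auto intro: Ov_mult)

lemma Ov_of_nat: "of_nat n \<in> Ov"
  by (induction n) (auto intro: Ov_add)

lemma Ov_of_int: "of_int n \<in> Ov"
  by (cases n rule: int_cases) (auto intro: Ov_of_nat Ov_minus simp del: of_nat_Suc)

lemma Ov_numeral: "numeral n \<in> Ov"
  using Ov_of_nat[of "numeral n"] by simp

lemma cg_refl: "x \<equiv>\<^sub>m x" by simp
lemma cg_sym: "x \<equiv>\<^sub>m y \<Longrightarrow> y \<equiv>\<^sub>m x" by (simp add: val_diff_sym)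
lemma cg_trans: "x \<equiv>\<^sub>m y \<Longrightarrow> y \<equiv>\<^sub>m z \<Longrightarrow> x \<equiv>\<^sub>m z"
  using val_add[of "x - y" "y - z"] by (auto simp: min_def split: if_splits)
lemma cg_add: "a \<equiv>\<^sub>m b \<Longrightarrow> c \<equiv>\<^sub>m d \<Longrightarrow> a + c \<equiv>\<^sub>m b + d"
  using val_add[of "a - b" "c - d"] by (auto simp: min_def algebra_simps split: if_splits)
lemma cg_minus: "a \<equiv>\<^sub>m b \<Longrightarrow> - a \<equiv>\<^sub>m - b"
  by (metis minus_diff_eq minus_diff_minus val_minus)
lemma cg_diff: "a \<equiv>\<^sub>m b \<Longrightarrow> c \<equiv>\<^sub>m d \<Longrightarrow> a - c \<equiv>\<^sub>m b - d"
  using cg_add[OF _ cg_minus, of a b c d] by simp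
lemma cg_mult_left: "c \<in> Ov \<Longrightarrow> a \<equiv>\<^sub>m b \<Longrightarrow> c * a \<equiv>\<^sub>m c * b"
proof -
  assume c: "c \<in> Ov" and ab: "a \<equiv>\<^sub>m b"
  have "val v (c * a - c * b) = val v c + val v (a - b)" by (simp add: val_mult[symmetric] algebra_simps)
  moreover have "val v c \<ge> 0" using c by (simp add: Ov_iff)
  ultimately show ?thesis using ab
    by (metis add.commute add_nonneg_pos ereal_less_add not_less_iff_gr_or_eq val_neq_minf zero_less_iff_neq_zero
        add_increasing2 order.strict_trans2 order_less_le)
qed
lemma cg_mult: "a \<in> Ov \<Longrightarrow> d \<in> Ov \<Longrightarrow> a \<equiv>\<^sub>m b \<Longrightarrow> c \<equiv>\<^sub>m d \<Longrightarrow> a * c \<equiv>\<^sub>m b * d"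
proof -
  assume h: "a \<in> Ov" "d \<in> Ov" "a \<equiv>\<^sub>m b" "c \<equiv>\<^sub>m d"
  have "a * c \<equiv>\<^sub>m a * d" by (rule cg_mult_left[OF h(1) h(4)])
  moreover have "d * a \<equiv>\<^sub>m d * b" by (rule cg_mult_left[OF h(2) h(3)])
  ultimately show ?thesis by (metis cg_trans mult.commute)
qed
lemma cg_power: "a \<in> Ov \<Longrightarrow> b \<in> Ov \<Longrightarrow> a \<equiv>\<^sub>m b \<Longrightarrow> a ^ n \<equiv>\<^sub>m b ^ n"
  by (induction n) (auto intro: cg_mult Ov_power)

end

context vfield begin

definition EE where "EE = {(x, y). x \<in> Ov \<and> y \<in> Ov \<and> val v (x - y) > 0}"

lemma equiv_EE: "equiv Ov EE"
proof (rule equivI)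
  show "EE \<subseteq> Ov \<times> Ov" by (auto simp: EE_def)
  show "refl_on Ov EE" by (auto simp: refl_on_def EE_def)
  show "sym EE" by (auto simp: sym_def EE_def intro: cg_sym)
  show "trans EE" by (auto simp: trans_def EE_def intro: cg_trans)
qed

lemma residue_field_EE: "residue_field v = Ov // EE"
  by (simp add: residue_field_def EE_def)

definition rep :: "'a set \<Rightarrow> 'a" where "rep C = (SOME x. x \<in> C)"
definition red :: "'a \<Rightarrow> 'a" where "red x = rep (EE `` {x})"
definition RR :: "'a set" where "RR = red ` Ov"

lemma rep_in: "C \<noteq> {} \<Longrightarrow> rep C \<in> C"
  unfolding rep_def by (metis some_in_eq)

lemma red_props: "x \<in> Ov \<Longrightarrow> red x \<in> Ov \<and> x \<equiv>\<^sub>m red x"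
proof -
  assume x: "x \<in> Ov"
  have "x \<in> EE `` {x}" using x by (simp add: EE_def)
  then have "red x \<in> EE `` {x}" unfolding red_def by (intro rep_in) blast
  then show ?thesis by (auto simp: EE_def)
qed

lemma red_Ov: "x \<in> Ov \<Longrightarrow> red x \<in> Ov" using red_props by blast
lemma red_cg: "x \<in> Ov \<Longrightarrow> red x \<equiv>\<^sub>m x" using red_props cg_sym by blast
lemma red_RR: "x \<in> Ov \<Longrightarrow> red x \<in> RR" by (simp add: RR_def)
lemma RR_Ov: "r \<in> RR \<Longrightarrow> r \<in> Ov" using red_Ov by (auto simp: RR_def)

lemma red_eq: "x \<in> Ov \<Longrightarrow> y \<in> Ov \<Longrightarrow> x \<equiv>\<^sub>m y \<Longrightarrow> red x = red y"
proof -
  assume h: "x \<in> Ov" "y \<in> Ov" "x \<equiv>\<^sub>m y"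
  have "EE `` {x} = EE `` {y}"
    using h by (intro equiv_class_eq[OF equiv_EE]) (simp add: EE_def)
  then show ?thesis by (simp add: red_def)
qed

lemma red_RR_id: "r \<in> RR \<Longrightarrow> red r = r"
proof -
  assume "r \<in> RR"
  then obtain x where x: "x \<in> Ov" "r = red x" by (auto simp: RR_def)
  then show ?thesis using red_eq[of r x] red_props[of x] cg_sym by auto
qed

lemma RR_unique: "r \<in> RR \<Longrightarrow> r' \<in> RR \<Longrightarrow> r \<equiv>\<^sub>m r' \<Longrightarrow> r = r'"
proof -
  assume h: "r \<in> RR" "r' \<in> RR" "r \<equiv>\<^sub>m r'"
  have "red r = red r'" using h RR_Ov by (intro red_eq) auto
  then show ?thesis using h red_RR_id by simp
qed

lemma RR_rep: "RR = rep ` (Ov // EE)"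
  by (auto simp: RR_def red_def quotient_def)

lemma rep_inj: "inj_on rep (Ov // EE)"
proof (rule inj_onI)
  fix X Y assume X: "X \<in> Ov // EE" and Y: "Y \<in> Ov // EE" and e: "rep X = rep Y"
  have "X \<noteq> {}" "Y \<noteq> {}" using X Y equiv_EE in_quotient_imp_non_empty by blast+
  then have "rep X \<in> X \<inter> Y" using e rep_in[of X] rep_in[of Y] by auto
  then show "X = Y" using quotient_disj[OF equiv_EE X Y] by auto
qed

lemma card_RR: "card RR = card (residue_field v)"
  by (simp add: RR_rep residue_field_EE card_image[OF rep_inj])

lemma finite_RR: "finite (residue_field v) \<Longrightarrow> finite RR"
  by (simp add: RR_rep residue_field_EE)

lemma cg_sum: "finite A \<Longrightarrow> (\<And>i. i \<in> A \<Longrightarrow> f i \<equiv>\<^sub>m g i) \<Longrightarrow> sum f A \<equiv>\<^sub>m sum g A"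
  by (induction A rule: finite_induct) (auto intro: cg_add)

lemma Ov_prod: "(\<And>i. i \<in> A \<Longrightarrow> f i \<in> Ov) \<Longrightarrow> prod f A \<in> Ov"
  by (induction A rule: infinite_finite_induct) (auto intro: Ov_mult)

lemma cg_prod: "finite A \<Longrightarrow> (\<And>i. i \<in> A \<Longrightarrow> f i \<equiv>\<^sub>m g i) \<Longrightarrow> (\<And>i. i \<in> A \<Longrightarrow> f i \<in> Ov)
   \<Longrightarrow> (\<And>i. i \<in> A \<Longrightarrow> g i \<in> Ov) \<Longrightarrow> prod f A \<equiv>\<^sub>m prod g A"
proof (induction A rule: finite_induct)
  case empty then show ?case by simp
next
  case (insert x F)
  have "f x * prod f F \<equiv>\<^sub>m g x * prod g F"
    using insert by (intro cg_mult Ov_prod) auto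
  then show ?case using insert by simp
qed

lemma q_cg_0:
  assumes fin: "finite (residue_field v)"
  shows "of_nat (card (residue_field v)) \<equiv>\<^sub>m 0"
proof -
  let ?t = "\<lambda>r. red (r + 1)"
  have fR: "finite RR" using finite_RR[OF fin] .
  have inj: "inj_on ?t RR"
  proof (rule inj_onI)
    fix r r' assume r: "r \<in> RR" "r' \<in> RR" and e: "?t r = ?t r'"
    have "r + 1 \<equiv>\<^sub>m red (r + 1)" using cg_sym[OF red_cg[OF Ov_add[OF RR_Ov[OF r(1)] Ov_1]]] .
    also have "red (r + 1) = red (r' + 1)" by (rule e)
    finally have "r + 1 \<equiv>\<^sub>m red (r' + 1)" .
    moreover have "red (r' + 1) \<equiv>\<^sub>m r' + 1" using red_cg[OF Ov_add[OF RR_Ov[OF r(2)] Ov_1]] .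
    ultimately have "r + 1 \<equiv>\<^sub>m r' + 1" by (rule cg_trans)
    then have "r \<equiv>\<^sub>m r'" by simp
    then show "r = r'" using RR_unique r by simp
  qed
  have img: "?t ` RR \<subseteq> RR" using RR_Ov Ov_add red_RR by (simp add: image_subset_iff)
  have bij: "bij_betw ?t RR RR"
    using endo_inj_surj[OF fR img inj] inj by (simp add: bij_betw_def)
  have "sum ?t RR = sum (\<lambda>r. r) RR" using sum.reindex_bij_betw[OF bij, of "\<lambda>r. r"] .
  moreover have "sum ?t RR \<equiv>\<^sub>m sum (\<lambda>r. r + 1) RR"
    using fR by (rule cg_sum) (simp add: RR_Ov Ov_add red_cg)
  ultimately have "sum (\<lambda>r. r) RR \<equiv>\<^sub>m sum (\<lambda>r. r) RR + of_nat (card RR)"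
    by (simp add: sum.distrib)
  then have "0 \<equiv>\<^sub>m of_nat (card RR)" by (simp add: val_diff_sym)
  then show ?thesis using card_RR cg_sym by simp
qed

lemma unit_cg: "x \<in> Ov \<Longrightarrow> \<not> x \<equiv>\<^sub>m 0 \<Longrightarrow> val v x = 0"
  by (simp add: Ov_iff)

lemma fermat_k:
  assumes fin: "finite (residue_field v)" and u: "val v u = 0"
  shows "u ^ (card (residue_field v) - 1) \<equiv>\<^sub>m 1"
proof -
  let ?R = "RR - {red 0}"
  let ?t = "\<lambda>r. red (u * r)"
  have fR: "finite ?R" using finite_RR[OF fin] by simp
  have uO: "u \<in> Ov" using u by (simp add: Ov_iff)
  have Rnz: "r \<in> ?R \<Longrightarrow> val v r = 0" for r
  proof -
    assume r: "r \<in> ?R"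
    have "\<not> r \<equiv>\<^sub>m 0"
    proof
      assume "r \<equiv>\<^sub>m 0"
      then have "red r = red 0" using r RR_Ov red_eq by auto
      then show False using r red_RR_id by auto
    qed
    then show ?thesis using r RR_Ov unit_cg by auto
  qed
  have tcg: "r \<in> ?R \<Longrightarrow> ?t r \<equiv>\<^sub>m u * r" for r
    using RR_Ov Ov_mult uO red_cg by auto
  have inj: "inj_on ?t ?R"
  proof (rule inj_onI)
    fix r r' assume r: "r \<in> ?R" "r' \<in> ?R" and e: "?t r = ?t r'"
    have "u * r \<equiv>\<^sub>m ?t r" using cg_sym[OF tcg[OF r(1)]] .
    then have "u * r \<equiv>\<^sub>m ?t r'" using e by simp
    then have "u * r \<equiv>\<^sub>m u * r'" using tcg[OF r(2)] by (rule cg_trans)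
    then have "val v u + val v (r - r') > 0" by (simp add: val_mult[symmetric] algebra_simps)
    then have "r \<equiv>\<^sub>m r'" using u by simp
    then show "r = r'" using RR_unique r by simp
  qed
  have img: "?t ` ?R \<subseteq> ?R"
  proof
    fix y assume "y \<in> ?t ` ?R"
    then obtain r where r: "r \<in> ?R" "y = ?t r" by auto
    have yR: "y \<in> RR" using r RR_Ov Ov_mult uO red_RR by auto
    have "val v (u * r) = 0" using u Rnz[OF r(1)] by (simp add: val_mult)
    moreover have "y \<equiv>\<^sub>m u * r" using tcg r by simp
    ultimately have "val v (u * r + (y - u * r)) = val v (u * r)"
      by (intro val_add_strict) simp
    then have vy: "val v y = 0" using \<open>val v (u * r) = 0\<close> by simp
    have "val v (red 0) > 0" using red_cg[of 0] by simp
    then have "y \<noteq> red 0" using vy by auto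
    then show "y \<in> ?R" using yR by simp
  qed
  have bij: "bij_betw ?t ?R ?R"
    using endo_inj_surj[OF fR img inj] inj by (simp add: bij_betw_def)
  have e1: "prod ?t ?R = prod (\<lambda>r. r) ?R" using prod.reindex_bij_betw[OF bij, of "\<lambda>r. r"] .
  have "prod ?t ?R \<equiv>\<^sub>m prod (\<lambda>r. u * r) ?R"
    using fR tcg by (rule cg_prod) (use RR_Ov Ov_mult uO red_Ov in auto)
  then have c: "prod (\<lambda>r. r) ?R \<equiv>\<^sub>m u ^ card ?R * prod (\<lambda>r. r) ?R"
    using e1 by (simp add: prod.distrib)
  have P0: "val v (prod (\<lambda>r. r) ?R) = 0"
    using fR Rnz by (induction rule: finite_induct) (auto simp: val_mult)
  have "val v ((u ^ card ?R - 1) * prod (\<lambda>r. r) ?R) > 0"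
    using c by (simp add: val_diff_sym algebra_simps)
  then have "val v (u ^ card ?R - 1) > 0" using P0 by (simp add: val_mult)
  moreover have "card ?R = card (residue_field v) - 1"
    using card_RR red_RR[of 0] by (simp add: card_Diff_singleton fR)
  ultimately show ?thesis by simp
qed

end

fun U :: "'a::comm_ring_1 \<Rightarrow> 'a \<Rightarrow> nat \<Rightarrow> 'a" where
  "U s d 0 = 0"
| "U s d (Suc 0) = 1"
| "U s d (Suc (Suc n)) = s * U s d (Suc n) - d * U s d n"

definition mulp :: "'a::comm_ring_1 \<Rightarrow> 'a \<Rightarrow> 'a \<times> 'a \<Rightarrow> 'a \<times> 'a \<Rightarrow> 'a \<times> 'a" where
  "mulp s d X Y = (fst X * fst Y - d * snd X * snd Y, fst X * snd Y + snd X * fst Y + s * snd X * snd Y)"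

definition powp :: "'a::comm_ring_1 \<Rightarrow> 'a \<Rightarrow> 'a \<times> 'a \<Rightarrow> nat \<Rightarrow> 'a \<times> 'a" where
  "powp s d X n = ((mulp s d X) ^^ n) (1, 0)"

lemma mulp_assoc: "mulp s d (mulp s d X Y) Z = mulp s d X (mulp s d Y Z)"
  by (simp add: mulp_def algebra_simps)
lemma mulp_comm: "mulp s d X Y = mulp s d Y X"
  by (simp add: mulp_def algebra_simps)
lemma mulp_one: "mulp s d X (1, 0) = X"
  by (simp add: mulp_def)
lemma mulp_one_left: "mulp s d (1, 0) X = X"
  by (simp add: mulp_def)

lemma powp_0[simp]: "powp s d X 0 = (1, 0)" by (simp add: powp_def)
lemma powp_Suc: "powp s d X (Suc n) = mulp s d X (powp s d X n)" by (simp add: powp_def)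
lemma powp_add: "powp s d X (m + n) = mulp s d (powp s d X m) (powp s d X n)"
  by (induction m) (simp_all add: powp_Suc mulp_one_left mulp_assoc)
lemma powp_mult: "powp s d X (m * n) = powp s d (powp s d X m) n"
  by (induction n) (simp_all add: powp_Suc powp_add mulp_comm)
lemma powp_scalar: "powp s d (c, 0) n = (c ^ n, 0)"
  by (induction n) (simp_all add: powp_Suc mulp_def)
lemma powp_theta: "powp s d (0, 1) (Suc n) = (- d * U s d n, U s d (Suc n))"
proof (induction n)
  case 0 then show ?case by (simp add: powp_Suc mulp_def)
next
  case (Suc n) then show ?case by (simp add: powp_Suc mulp_def algebra_simps)
qed

locale pairalg =
  fixes s d :: "'a::comm_ring_1"
begin
sublocale PP: comm_monoid_set "mulp s d" "(1, 0)"
  by unfold_locales (simp_all add: mulp_def algebra_simps)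

lemma PP_const: "finite A \<Longrightarrow> PP.F (\<lambda>_. c) A = powp s d c (card A)"
  by (induction A rule: finite_induct) (simp_all add: powp_Suc)
end

locale vpair = vfield v + pairalg s d for v :: "'a::field \<Rightarrow> int" and s d :: 'a +
  assumes sO: "s \<in> Ov" and dO: "d \<in> Ov"
begin

definition pcg where "pcg X Y \<longleftrightarrow> fst X \<equiv>\<^sub>m fst Y \<and> snd X \<equiv>\<^sub>m snd Y"
definition pO where "pO X \<longleftrightarrow> fst X \<in> Ov \<and> snd X \<in> Ov"

lemma pcg_refl: "pcg X X" by (simp add: pcg_def)
lemma pcg_sym: "pcg X Y \<Longrightarrow> pcg Y X" by (auto simp: pcg_def intro: cg_sym)
lemma pcg_trans: "pcg X Y \<Longrightarrow> pcg Y Z \<Longrightarrow> pcg X Z" by (auto simp: pcg_def intro: cg_trans)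

lemma pO_mulp: "pO X \<Longrightarrow> pO Y \<Longrightarrow> pO (mulp s d X Y)"
  using sO dO by (auto simp: pO_def mulp_def intro!: Ov_add Ov_diff Ov_mult)

lemma pcg_mulp: "pO X \<Longrightarrow> pO W \<Longrightarrow> pcg X Y \<Longrightarrow> pcg Z W \<Longrightarrow> pcg (mulp s d X Z) (mulp s d Y W)"
proof -
  assume h: "pO X" "pO W" "pcg X Y" "pcg Z W"
  obtain x1 x2 where X: "X = (x1, x2)" by force
  obtain y1 y2 where Y: "Y = (y1, y2)" by force
  obtain z1 z2 where Z: "Z = (z1, z2)" by force
  obtain w1 w2 where W: "W = (w1, w2)" by force
  have x: "x1 \<in> Ov" "x2 \<in> Ov" "w1 \<in> Ov" "w2 \<in> Ov" using h X W by (auto simp: pO_def)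
  have c: "x1 \<equiv>\<^sub>m y1" "x2 \<equiv>\<^sub>m y2" "z1 \<equiv>\<^sub>m w1" "z2 \<equiv>\<^sub>m w2" using h X Y Z W by (auto simp: pcg_def)
  have m1: "x1 * z1 \<equiv>\<^sub>m y1 * w1" "x1 * z2 \<equiv>\<^sub>m y1 * w2" "x2 * z1 \<equiv>\<^sub>m y2 * w1" "x2 * z2 \<equiv>\<^sub>m y2 * w2"
    using x c by (auto intro: cg_mult)
  have a: "d * x2 * z2 \<equiv>\<^sub>m d * y2 * w2" using cg_mult_left[OF dO m1(4)] by (simp add: mult.assoc)
  have b: "s * x2 * z2 \<equiv>\<^sub>m s * y2 * w2" using cg_mult_left[OF sO m1(4)] by (simp add: mult.assoc)
  show ?thesis unfolding X Y Z W pcg_def mulp_def fst_conv snd_conv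
    using cg_diff[OF m1(1) a] cg_add[OF cg_add[OF m1(2) m1(3)] b] by simp
qed

lemma pO_PP: "(\<And>i. i \<in> A \<Longrightarrow> pO (f i)) \<Longrightarrow> pO (PP.F f A)"
  apply (induction A rule: infinite_finite_induct)
    apply (simp add: pO_def)
   apply (simp add: pO_def)
  apply (simp add: pO_mulp)
  done

lemma pcg_PP: "finite A \<Longrightarrow> (\<And>i. i \<in> A \<Longrightarrow> pcg (f i) (g i)) \<Longrightarrow> (\<And>i. i \<in> A \<Longrightarrow> pO (f i))
   \<Longrightarrow> (\<And>i. i \<in> A \<Longrightarrow> pO (g i)) \<Longrightarrow> pcg (PP.F f A) (PP.F g A)"
proof (induction A rule: finite_induct)
  case empty then show ?case by (simp add: pcg_refl)
next
  case (insert x F)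
  have "pcg (mulp s d (f x) (PP.F f F)) (mulp s d (g x) (PP.F g F))"
    using insert by (intro pcg_mulp pO_PP) auto
  then show ?case using insert by simp
qed

lemma pO_powp: "pO X \<Longrightarrow> pO (powp s d X n)"
  apply (induction n)
   apply (simp add: pO_def)
  apply (simp add: powp_Suc pO_mulp)
  done

lemma pcg_powp: "pO X \<Longrightarrow> pO Y \<Longrightarrow> pcg X Y \<Longrightarrow> pcg (powp s d X n) (powp s d Y n)"
  by (induction n) (auto simp: powp_Suc pcg_refl intro: pcg_mulp pO_powp)

end

context vpair begin

definition redp where "redp X = (red (fst X), red (snd X))"
definition conjp where "conjp X = (fst X + s * snd X, - snd X)"
definition nrm where "nrm X = fst X ^ 2 + s * fst X * snd X + d * snd X ^ 2"

lemma U_Ov2: "U s d k \<in> Ov \<and> U s d (Suc k) \<in> Ov"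
  by (induction k) (auto intro!: Ov_diff Ov_mult sO dO)
lemma U_Ov: "U s d k \<in> Ov" using U_Ov2 by blast

lemma mulp_conj: "mulp s d X (conjp X) = (nrm X, 0)"
  by (simp add: mulp_def conjp_def nrm_def algebra_simps power2_eq_square)

lemma PP_scalar: "PP.F (\<lambda>X. (f X, 0)) A = (prod f A, 0)"
  by (induction A rule: infinite_finite_induct) (simp_all add: mulp_def)

lemma RR_red0: "r \<in> RR \<Longrightarrow> r = red 0 \<longleftrightarrow> r \<equiv>\<^sub>m 0"
proof
  assume r: "r \<in> RR" "r = red 0"
  then show "r \<equiv>\<^sub>m 0" using red_cg[of 0] by simp
next
  assume r: "r \<in> RR" "r \<equiv>\<^sub>m 0"
  have "red 0 \<equiv>\<^sub>m 0" using red_cg[of 0] by simp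
  then have "r \<equiv>\<^sub>m red 0" using r cg_trans cg_sym by blast
  then show "r = red 0" using RR_unique r red_RR[of 0] by simp
qed

lemma fermat_inert:
  assumes fin: "finite (residue_field v)" and vd: "val v d = 0"
    and noroot: "\<forall>\<rho>\<in>Ov. \<not> (\<rho>^2 - s * \<rho> + d \<equiv>\<^sub>m 0)"
  shows "pcg (powp s d (0, 1) (card (residue_field v) ^ 2 - 1)) (1, 0)"
proof -
  define T where "T = RR \<times> RR - {(red 0, red 0)}"
  define th where "th = ((0::'a), (1::'a))"
  define th' where "th' = (s / d, - 1 / d)"
  define \<phi> where "\<phi> X = redp (mulp s d th X)" for X
  have fR: "finite RR" using finite_RR[OF fin] .
  have fT: "finite T" using fR by (simp add: T_def)
  have d0: "d \<noteq> 0" using vd by (auto simp: val_def)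
  have pth: "pO th" by (simp add: th_def pO_def)
  have pth': "pO th'"
  proof -
    have "val v (s / d) \<ge> 0" using sO vd d0
      by (simp add: divide_inverse val_mult val_inverse Ov_iff)
    moreover have "val v (- 1 / d) \<ge> 0" using vd d0
      by (simp add: divide_inverse val_mult val_inverse)
    ultimately show ?thesis by (simp add: th'_def pO_def Ov_iff)
  qed
  have thinv: "mulp s d th' (mulp s d th X) = X" for X
  proof -
    have "mulp s d th' th = (1, 0)" using d0 by (simp add: mulp_def th_def th'_def field_simps)
    then show ?thesis by (simp add: mulp_assoc[symmetric] mulp_one_left)
  qed
  have pT: "X \<in> T \<Longrightarrow> pO X" for X using RR_Ov by (auto simp: T_def pO_def)
  have redp_cg: "pO X \<Longrightarrow> pcg (redp X) X" for X by (simp add: redp_def pcg_def pO_def red_cg)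
  have redp_RR: "pO X \<Longrightarrow> redp X \<in> RR \<times> RR" for X by (simp add: redp_def pO_def red_RR)
  have RRpair: "X \<in> RR \<times> RR \<Longrightarrow> Y \<in> RR \<times> RR \<Longrightarrow> pcg X Y \<Longrightarrow> X = Y" for X Y
    using RR_unique by (auto simp: pcg_def prod_eq_iff)
  have cancel: "pO Y \<Longrightarrow> pcg (mulp s d th X) (mulp s d th Y) \<Longrightarrow> pcg X Y" for X Y
  proof -
    assume h: "pO Y" "pcg (mulp s d th X) (mulp s d th Y)"
    have "pcg (mulp s d th' (mulp s d th X)) (mulp s d th' (mulp s d th Y))"
      using pcg_mulp[OF pth' pO_mulp[OF pth h(1)] pcg_refl h(2)] .
    then show ?thesis by (simp add: thinv)
  qed
  have inj: "inj_on \<phi> T"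
  proof (rule inj_onI)
    fix X Y assume X: "X \<in> T" and Y: "Y \<in> T" and e: "\<phi> X = \<phi> Y"
    have "pcg (mulp s d th X) (\<phi> X)" unfolding \<phi>_def
      using pcg_sym[OF redp_cg[OF pO_mulp[OF pth pT[OF X]]]] .
    then have "pcg (mulp s d th X) (\<phi> Y)" using e by simp
    then have "pcg (mulp s d th X) (mulp s d th Y)" unfolding \<phi>_def
      using redp_cg[OF pO_mulp[OF pth pT[OF Y]]] by (rule pcg_trans)
    then have "pcg X Y" using cancel pT[OF Y] by blast
    then show "X = Y" using RRpair X Y by (auto simp: T_def)
  qed
  have img: "\<phi> ` T \<subseteq> T"
  proof
    fix Z assume "Z \<in> \<phi> ` T"
    then obtain X where X: "X \<in> T" and Z: "Z = \<phi> X" by auto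
    have ZR: "Z \<in> RR \<times> RR" unfolding Z \<phi>_def using redp_RR pO_mulp pth pT X by blast
    have "Z \<noteq> (red 0, red 0)"
    proof
      assume z: "Z = (red 0, red 0)"
      have "pcg (mulp s d th X) Z" unfolding Z \<phi>_def
        using pcg_sym[OF redp_cg[OF pO_mulp[OF pth pT[OF X]]]] .
      moreover have "pcg Z (mulp s d th (0, 0))" using z red_cg[of 0] by (simp add: pcg_def mulp_def)
      ultimately have "pcg (mulp s d th X) (mulp s d th (0, 0))" by (rule pcg_trans)
      then have "pcg X (0, 0)" using cancel by (simp add: pO_def)
      then have "fst X \<equiv>\<^sub>m 0" "snd X \<equiv>\<^sub>m 0" by (auto simp: pcg_def)
      then have "X = (red 0, red 0)" using X RR_red0 by (auto simp: T_def prod_eq_iff)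
      then show False using X by (simp add: T_def)
    qed
    then show "Z \<in> T" using ZR by (simp add: T_def)
  qed
  have bij: "bij_betw \<phi> T T"
    using endo_inj_surj[OF fT img inj] inj by (simp add: bij_betw_def)
  define P where "P = PP.F (\<lambda>X. X) T"
  define Q where "Q = PP.F conjp T"
  define Th where "Th = powp s d th (card T)"
  have e1: "PP.F \<phi> T = P" unfolding P_def using PP.reindex_bij_betw[OF bij, of "\<lambda>X. X"] .
  have e2: "pcg (PP.F \<phi> T) (PP.F (\<lambda>X. mulp s d th X) T)"
    using fT unfolding \<phi>_def
    by (rule pcg_PP) (use redp_cg pO_mulp pth pT red_Ov in \<open>auto simp: redp_def pO_def\<close>)
  have e3: "PP.F (\<lambda>X. mulp s d th X) T = mulp s d Th P"
    unfolding Th_def P_def using PP.distrib[of "\<lambda>_. th" "\<lambda>X. X" T] PP_const[OF fT] by simp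
  have c1: "pcg P (mulp s d Th P)" using e1 e2 e3 by simp
  have pP: "pO P" unfolding P_def using pT by (intro pO_PP) auto
  have pQ: "pO Q" unfolding Q_def using pT sO
    by (intro pO_PP) (auto simp: conjp_def pO_def intro!: Ov_add Ov_mult Ov_minus)
  have pTh: "pO Th" unfolding Th_def using pth by (rule pO_powp)
  have "pcg (mulp s d P Q) (mulp s d (mulp s d Th P) Q)"
    using c1 pP pQ by (intro pcg_mulp) (auto simp: pcg_refl)
  moreover have PQ: "mulp s d P Q = (prod nrm T, 0)"
  proof -
    have "mulp s d P Q = PP.F (\<lambda>X. mulp s d X (conjp X)) T"
      unfolding P_def Q_def using PP.distrib[of "\<lambda>X. X" conjp T] by simp
    also have "\<dots> = PP.F (\<lambda>X. (nrm X, 0)) T" by (simp add: mulp_conj)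
    finally show ?thesis by (simp add: PP_scalar)
  qed
  ultimately have c2: "pcg (prod nrm T, 0) (mulp s d Th (prod nrm T, 0))"
    by (simp add: mulp_assoc)
  have nrm_unit: "X \<in> T \<Longrightarrow> val v (nrm X) = 0" for X
  proof -
    assume X: "X \<in> T"
    obtain a b where ab: "X = (a, b)" by force
    have aR: "a \<in> RR" and bR: "b \<in> RR" and nz: "\<not> (a \<equiv>\<^sub>m 0 \<and> b \<equiv>\<^sub>m 0)"
      using X ab RR_red0 by (auto simp: T_def)
    have aO: "a \<in> Ov" and bO: "b \<in> Ov" using aR bR RR_Ov by auto
    show ?thesis
    proof (cases "b \<equiv>\<^sub>m 0")
      case False
      then have vb: "val v b = 0" using bO unit_cg by simp
      then have b0: "b \<noteq> 0" by (auto simp: val_def)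
      define \<rho> where "\<rho> = - a / b"
      have \<rho>O: "\<rho> \<in> Ov" using aO vb b0
        by (simp add: \<rho>_def Ov_iff divide_inverse val_mult val_inverse)
      have fO: "\<rho>^2 - s * \<rho> + d \<in> Ov" using \<rho>O sO dO
        by (intro Ov_add Ov_diff Ov_mult Ov_power)
      have vf: "val v (\<rho>^2 - s * \<rho> + d) = 0" using noroot \<rho>O fO unit_cg by blast
      have "nrm X = b^2 * (\<rho>^2 - s * \<rho> + d)" using b0
        by (simp add: ab nrm_def \<rho>_def field_simps power2_eq_square)
      then show ?thesis using vf vb by (simp add: val_mult power2_eq_square)
    next
      case True
      then have va: "val v a = 0" using nz aO unit_cg by blast
      have "val v (b * (s * a + d * b)) > 0"
      proof -
        have "val v (s * a + d * b) \<ge> 0" using aO bO sO dO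
          by (simp add: Ov_iff[symmetric] Ov_add Ov_mult)
        then show ?thesis using True by (simp add: val_mult add_pos_nonneg)
      qed
      then have "val v (a^2 + b * (s * a + d * b)) = val v (a^2)"
        using va by (intro val_add_strict) (simp add: val_mult power2_eq_square)
      moreover have "nrm X = a^2 + b * (s * a + d * b)"
        by (simp add: ab nrm_def algebra_simps power2_eq_square)
      ultimately show ?thesis using va by (simp add: val_mult power2_eq_square)
    qed
  qed
  define u where "u = prod nrm T"
  have vu: "val v u = 0" unfolding u_def using fT nrm_unit
    by (induction rule: finite_induct) (auto simp: val_mult)
  obtain t1 t2 where Th: "Th = (t1, t2)" by force
  have c3: "u \<equiv>\<^sub>m t1 * u" "0 \<equiv>\<^sub>m t2 * u" using c2 by (auto simp: u_def Th mulp_def pcg_def)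
  have "val v ((t1 - 1) * u) > 0" using c3(1) by (simp add: val_diff_sym algebra_simps)
  then have t1: "t1 \<equiv>\<^sub>m 1" using vu by (simp add: val_mult)
  have "val v (t2 * u) > 0" using c3(2) by (simp add: val_diff_sym)
  then have t2: "t2 \<equiv>\<^sub>m 0" using vu by (simp add: val_mult)
  have "card T = card (residue_field v) ^ 2 - 1"
    using fR red_RR[of 0] card_RR by (simp add: T_def card_Diff_singleton card_cartesian_product power2_eq_square)
  then show ?thesis using t1 t2 Th by (simp add: Th_def th_def pcg_def)
qed

end

lemma ereal_double0: "(a::ereal) + a = 0 \<Longrightarrow> a = 0" by (cases a) auto

lemma (in vfield) val_power0: "val v x = 0 \<Longrightarrow> val v (x ^ k) = 0"
  by (induction k) (simp_all add: val_mult)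

context vpair begin

lemma U_ramified:
  assumes vd: "val v d = 0" and v2: "val v (2::'a) = 0" and vdisc: "val v (s^2 - 4 * d) > 0"
    and vn: "val v (of_nat n :: 'a) = 0"
  shows "val v (U s d n) = 0"
proof -
  define l where "l = s / 2"
  have two: "(2::'a) \<noteq> 0" using v2 by (auto simp: val_def)
  have v4: "val v (4::'a) = 0" using v2 val_mult[of "2::'a" 2] by simp
  have sl: "s = 2 * l" using two by (simp add: l_def)
  have "s^2 - 4 * d = 4 * (l^2 - d)" by (simp add: sl power2_eq_square algebra_simps)
  then have "val v (4 * (l^2 - d)) > 0" using vdisc by simp
  then have "val v (l^2 - d) > 0" using v4 by (simp only: val_mult) simp
  then have dl: "d \<equiv>\<^sub>m l^2" using cg_sym by blast
  have "val v (4 * d) = 0" using v4 vd by (simp add: val_mult)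
  then have "val v (4 * d + (s^2 - 4 * d)) = val v (4 * d)"
    using vdisc by (intro val_add_strict) simp
  then have "val v (s^2) = 0" using \<open>val v (4 * d) = 0\<close> by simp
  moreover have "val v (s^2) = val v s + val v s" unfolding power2_eq_square by (rule val_mult)
  ultimately have "val v s + val v s = 0" by simp
  then have vs: "val v s = 0" by (rule ereal_double0)
  have "val v l = val v s + val v (inverse 2)" unfolding l_def divide_inverse by (rule val_mult)
  also have "val v (inverse (2::'a)) = - val v 2" using two by (rule val_inverse)
  finally have vl: "val v l = 0" using vs v2 by simp
  have lO: "l \<in> Ov" using vl by (simp add: Ov_iff)
  have key: "U s d (Suc k) \<equiv>\<^sub>m of_nat (Suc k) * l ^ k \<and> U s d (Suc (Suc k)) \<equiv>\<^sub>m of_nat (Suc (Suc k)) * l ^ Suc k" for k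
  proof (induction k)
    case 0
    show ?case using sl by simp
  next
    case (Suc k)
    have h1: "U s d (Suc (Suc k)) \<equiv>\<^sub>m of_nat (Suc (Suc k)) * l ^ Suc k" using Suc by blast
    have h0: "U s d (Suc k) \<equiv>\<^sub>m of_nat (Suc k) * l ^ k" using Suc by blast
    have a: "s * U s d (Suc (Suc k)) \<equiv>\<^sub>m s * (of_nat (Suc (Suc k)) * l ^ Suc k)"
      using cg_mult_left[OF sO h1] .
    have b: "d * U s d (Suc k) \<equiv>\<^sub>m l^2 * (of_nat (Suc k) * l ^ k)"
      by (rule cg_mult[OF dO Ov_mult[OF Ov_of_nat Ov_power[OF lO]] dl h0])
    have "U s d (Suc (Suc (Suc k))) \<equiv>\<^sub>m s * (of_nat (Suc (Suc k)) * l ^ Suc k) - l^2 * (of_nat (Suc k) * l ^ k)"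
      using cg_diff[OF a b] by simp
    moreover have "s * (of_nat (Suc (Suc k)) * l ^ Suc k) - l^2 * (of_nat (Suc k) * l ^ k)
        = of_nat (Suc (Suc (Suc k))) * l ^ Suc (Suc k)"
      by (simp add: sl power2_eq_square algebra_simps)
    ultimately show ?case using h1 by simp
  qed
  show ?thesis
  proof (cases n)
    case 0 then show ?thesis using vn by simp
  next
    case (Suc k)
    have c: "U s d n \<equiv>\<^sub>m of_nat n * l ^ k" using key[of k] Suc by simp
    have vv: "val v (of_nat n * l ^ k) = 0" using vn vl
      by (simp add: val_mult val_power0)
    have "val v (of_nat n * l ^ k + (U s d n - of_nat n * l ^ k)) = val v (of_nat n * l ^ k)"
      using c vv by (intro val_add_strict) simp
    then show ?thesis using vv by simp
  qed
qed

end

lemma U_split_identity: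
  "(r - r') * U (r + r') (r * r') k = r ^ k - r' ^ k"
proof -
  have "(r - r') * U (r + r') (r * r') k = r ^ k - r' ^ k \<and>
        (r - r') * U (r + r') (r * r') (Suc k) = r ^ Suc k - r' ^ Suc k"
  proof (induction k)
    case 0 then show ?case by simp
  next
    case (Suc k)
    let ?U = "U (r + r') (r * r')"
    have "(r - r') * ?U (Suc (Suc k)) = (r + r') * ((r - r') * ?U (Suc k)) - r * r' * ((r - r') * ?U k)"
      by (simp add: algebra_simps)
    also have "\<dots> = (r + r') * (r ^ Suc k - r' ^ Suc k) - r * r' * (r ^ k - r' ^ k)" using Suc by simp
    also have "\<dots> = r ^ Suc (Suc k) - r' ^ Suc (Suc k)" by (simp add: algebra_simps)
    finally show ?case using Suc by simp
  qed
  then show ?thesis by blast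
qed

context vpair begin

lemma U_cg_d:
  assumes "d \<equiv>\<^sub>m d'" "d' \<in> Ov"
  shows "U s d k \<equiv>\<^sub>m U s d' k"
proof -
  interpret V': vpair v s d' by unfold_locales (use sO assms in auto)
  have "U s d k \<equiv>\<^sub>m U s d' k \<and> U s d (Suc k) \<equiv>\<^sub>m U s d' (Suc k)"
  proof (induction k)
    case 0 then show ?case by simp
  next
    case (Suc k)
    have a: "s * U s d (Suc k) \<equiv>\<^sub>m s * U s d' (Suc k)" using Suc cg_mult_left[OF sO] by blast
    have b: "d * U s d k \<equiv>\<^sub>m d' * U s d' k" using Suc cg_mult[OF dO V'.U_Ov assms(1)] by blast
    show ?case using Suc cg_diff[OF a b] by simp
  qed
  then show ?thesis by blast
qed

lemma U_split:
  assumes fin: "finite (residue_field v)" and vd: "val v d = 0"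
    and vdisc: "val v (s^2 - 4 * d) = 0"
    and \<rho>O: "\<rho> \<in> Ov" and root: "\<rho>^2 - s * \<rho> + d \<equiv>\<^sub>m 0"
    and cop: "coprime n (card (residue_field v) - 1)" and n0: "n \<noteq> 0"
  shows "\<not> U s d n \<equiv>\<^sub>m 0"
proof
  assume Un: "U s d n \<equiv>\<^sub>m 0"
  define \<rho>' where "\<rho>' = s - \<rho>"
  have \<rho>'O: "\<rho>' \<in> Ov" using sO \<rho>O by (simp add: \<rho>'_def Ov_diff)
  have s_eq: "s = \<rho> + \<rho>'" by (simp add: \<rho>'_def)
  have dcg: "d \<equiv>\<^sub>m \<rho> * \<rho>'" using root by (simp add: \<rho>'_def algebra_simps power2_eq_square)
  have "val v (d + (\<rho> * \<rho>' - d)) = val v d" using dcg vd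
    by (intro val_add_strict) (simp add: val_diff_sym)
  then have vrr: "val v (\<rho> * \<rho>') = 0" using vd by simp
  have v\<rho>: "val v \<rho> = 0" and v\<rho>': "val v \<rho>' = 0"
    using vrr \<rho>O \<rho>'O by (auto simp: val_mult Ov_iff add_nonneg_eq_0_iff)
  have e: "(\<rho> - \<rho>')^2 = (s^2 - 4 * d) + 4 * (\<rho>^2 - s * \<rho> + d)"
    by (simp add: \<rho>'_def power2_eq_square algebra_simps)
  have pos: "val v (4 * (\<rho>^2 - s * \<rho> + d)) > 0"
  proof -
    have "val v (4::'a) \<ge> 0" using Ov_numeral[of "num.Bit0 (num.Bit0 num.One)"] by (simp add: Ov_iff)
    moreover have "val v (4 * (\<rho>^2 - s * \<rho> + d)) = val v 4 + val v (\<rho>^2 - s * \<rho> + d)" by (rule val_mult)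
    ultimately show ?thesis using root by (simp add: add_nonneg_pos)
  qed
  have "val v ((s^2 - 4 * d) + 4 * (\<rho>^2 - s * \<rho> + d)) = val v (s^2 - 4 * d)"
    by (rule val_add_strict) (simp only: vdisc pos)
  then have h1: "val v ((\<rho> - \<rho>')^2) = 0" using vdisc by (simp only: e)
  have h2: "val v ((\<rho> - \<rho>')^2) = val v (\<rho> - \<rho>') + val v (\<rho> - \<rho>')"
    unfolding power2_eq_square by (rule val_mult)
  have "val v (\<rho> - \<rho>') + val v (\<rho> - \<rho>') = 0" using trans[OF h2[symmetric] h1] .
  then have vdiff: "val v (\<rho> - \<rho>') = 0" by (rule ereal_double0)
  have A: "U s d n \<equiv>\<^sub>m U s (\<rho> * \<rho>') n" using U_cg_d[OF dcg Ov_mult[OF \<rho>O \<rho>'O]] .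
  have "U s (\<rho> * \<rho>') n \<equiv>\<^sub>m 0" using cg_trans[OF cg_sym[OF A] Un] .
  then have "(\<rho> - \<rho>') * U s (\<rho> * \<rho>') n \<equiv>\<^sub>m (\<rho> - \<rho>') * 0"
    by (intro cg_mult_left Ov_diff \<rho>O \<rho>'O)
  then have pn: "\<rho> ^ n \<equiv>\<^sub>m \<rho>' ^ n" using U_split_identity[of \<rho> \<rho>' n] by (simp add: s_eq)
  obtain x y where xy: "n * x = (card (residue_field v) - 1) * y + 1"
    using bezout_nat[OF n0, of "card (residue_field v) - 1"] cop by auto
  define m where "m = card (residue_field v) - 1"
  have f1: "\<rho> ^ m \<equiv>\<^sub>m 1" unfolding m_def by (rule fermat_k[OF fin v\<rho>])
  have f2: "\<rho>' ^ m \<equiv>\<^sub>m 1" unfolding m_def by (rule fermat_k[OF fin v\<rho>'])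
  have red1: "a \<in> Ov \<Longrightarrow> a ^ m \<equiv>\<^sub>m 1 \<Longrightarrow> a ^ (n * x) \<equiv>\<^sub>m a" for a
  proof -
    assume a: "a \<in> Ov" "a ^ m \<equiv>\<^sub>m 1"
    have "(a ^ m) ^ y \<equiv>\<^sub>m 1 ^ y" by (intro cg_power Ov_power a) simp_all
    then have "a * (a ^ m) ^ y \<equiv>\<^sub>m a * 1" by (intro cg_mult_left a) simp
    moreover have "a ^ (n * x) = a * (a ^ m) ^ y" using xy by (simp add: m_def power_mult power_add)
    ultimately show ?thesis by simp
  qed
  have "(\<rho> ^ n) ^ x \<equiv>\<^sub>m (\<rho>' ^ n) ^ x" by (intro cg_power Ov_power \<rho>O \<rho>'O pn)
  then have P: "\<rho> ^ (n * x) \<equiv>\<^sub>m \<rho>' ^ (n * x)" by (simp add: power_mult)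
  have "\<rho> \<equiv>\<^sub>m \<rho>'" using cg_trans[OF cg_sym[OF red1[OF \<rho>O f1]] cg_trans[OF P red1[OF \<rho>'O f2]]] .
  then have "0 < val v (\<rho> - \<rho>')" .
  then show False unfolding vdiff by (simp only: less_irrefl)
qed

lemma U_inert:
  assumes fin: "finite (residue_field v)" and vd: "val v d = 0"
    and noroot: "\<forall>\<rho>\<in>Ov. \<not> (\<rho>^2 - s * \<rho> + d \<equiv>\<^sub>m 0)"
    and cop: "coprime n (card (residue_field v) ^ 2 - 1)" and n0: "n \<noteq> 0"
  shows "\<not> U s d n \<equiv>\<^sub>m 0"
proof
  assume Un: "U s d n \<equiv>\<^sub>m 0"
  define th where "th = ((0::'a), (1::'a))"
  define m where "m = card (residue_field v) ^ 2 - 1"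
  have F: "pcg (powp s d th m) (1, 0)" unfolding th_def m_def by (rule fermat_inert[OF fin vd noroot])
  obtain k where k: "n = Suc k" using n0 not0_implies_Suc by blast
  define c where "c = - d * U s d k"
  have cO: "c \<in> Ov" by (simp add: c_def Ov_minus Ov_mult dO U_Ov)
  have pn: "powp s d th n = (c, U s d n)" by (simp add: th_def k powp_theta c_def)
  have pn': "pcg (powp s d th n) (c, 0)" using pn Un by (simp add: pcg_def)
  obtain x y where xy: "n * x = m * y + 1"
    using bezout_nat[OF n0, of m] cop by (auto simp: m_def)
  have pth: "pO th" by (simp add: th_def pO_def)
  have A: "pcg (powp s d th (n * x)) (c ^ x, 0)"
  proof -
    have "pcg (powp s d (powp s d th n) x) (powp s d (c, 0) x)"
      using pn' pO_powp[OF pth] cO by (intro pcg_powp) (auto simp: pO_def)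
    then show ?thesis by (simp add: powp_mult powp_scalar)
  qed
  have B: "pcg (powp s d th (n * x)) th"
  proof -
    have "powp s d th (n * x) = powp s d th (m * y + 1)" using xy by simp
    also have "\<dots> = mulp s d (powp s d th (m * y)) (powp s d th 1)" by (rule powp_add)
    also have "\<dots> = mulp s d (powp s d (powp s d th m) y) (powp s d th 1)" by (simp only: powp_mult)
    finally have "powp s d th (n * x) = mulp s d (powp s d (powp s d th m) y) (powp s d th 1)" .
    moreover have C: "pcg (powp s d (powp s d th m) y) (powp s d (1, 0) y)"
      using F pO_powp[OF pth] by (intro pcg_powp) (auto simp: pO_def)
    have "pcg (mulp s d (powp s d (powp s d th m) y) (powp s d th 1)) (mulp s d (powp s d (1, 0) y) (powp s d th 1))"
      by (rule pcg_mulp[OF pO_powp[OF pO_powp[OF pth]] pO_powp[OF pth] C pcg_refl])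
    ultimately have "pcg (powp s d th (n * x)) (mulp s d (powp s d (1, 0) y) (powp s d th 1))"
      by simp
    moreover have "mulp s d (powp s d (1, 0) y) (powp s d th 1) = th"
      using powp_scalar[of s d 1 y] by (simp add: powp_Suc mulp_one mulp_one_left)
    ultimately show ?thesis by simp
  qed
  have "pcg th (c ^ x, 0)" using pcg_trans[OF pcg_sym[OF B] A] .
  then have "0 < val v (1 - 0)" by (simp only: th_def pcg_def snd_conv)
  then have "0 < val v (1::'a)" by (simp only: diff_zero)
  then show False by (simp only: val_one less_irrefl)
qed

end

context vfield begin

lemma val_nat_coprime:
  assumes cop: "coprime a b" and vb: "val v (of_nat b :: 'a) > 0"
  shows "val v (of_nat a :: 'a) = 0"
proof (rule ccontr)
  assume "val v (of_nat a :: 'a) \<noteq> 0"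
  moreover have "val v (of_nat a :: 'a) \<ge> 0" using Ov_of_nat by (simp add: Ov_iff)
  ultimately have va: "val v (of_nat a :: 'a) > 0" by simp
  have "gcd (int a) (int b) = 1" using cop by (simp add: coprime_iff_gcd_eq_1 gcd_int_def)
  then obtain x y where xy: "x * int a + y * int b = 1" using bezout_int[of "int a" "int b"] by auto
  have "(of_int (x * int a + y * int b) :: 'a) = 1" using xy by simp
  then have e: "(of_int x * of_nat a + of_int y * of_nat b :: 'a) = 1" by simp
  have p1: "val v (of_int x * of_nat a :: 'a) > 0"
  proof -
    have "val v (of_int x :: 'a) \<ge> 0" using Ov_of_int by (simp add: Ov_iff)
    moreover have "val v (of_int x * of_nat a :: 'a) = val v (of_int x :: 'a) + val v (of_nat a :: 'a)" by (rule val_mult)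
    ultimately show ?thesis using va by (simp add: add_nonneg_pos)
  qed
  have p2: "val v (of_int y * of_nat b :: 'a) > 0"
  proof -
    have "val v (of_int y :: 'a) \<ge> 0" using Ov_of_int by (simp add: Ov_iff)
    moreover have "val v (of_int y * of_nat b :: 'a) = val v (of_int y :: 'a) + val v (of_nat b :: 'a)" by (rule val_mult)
    ultimately show ?thesis using vb by (simp add: add_nonneg_pos)
  qed
  have "val v (of_int x * of_nat a + of_int y * of_nat b :: 'a) \<ge> min (val v (of_int x * of_nat a :: 'a)) (val v (of_int y * of_nat b :: 'a))"
    by (rule val_add)
  then have "val v (of_int x * of_nat a + of_int y * of_nat b :: 'a) > 0" using p1 p2
    by (simp add: min_def split: if_splits)
  then have "val v (1::'a) > 0" by (simp only: e)
  then show False by (simp only: val_one less_irrefl)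
qed

end

context vpair begin

lemma U_unit:
  assumes fin: "finite (residue_field v)" and vd: "val v d = 0" and v2: "val v (2::'a) = 0"
    and cop: "coprime n ((card (residue_field v) - 1) * card (residue_field v) * (card (residue_field v) + 1))"
  shows "val v (U s d n) = 0"
proof -
  define q where "q = card (residue_field v)"
  have cop': "coprime n ((q - 1) * q * (q + 1))" using cop by (simp add: q_def)
  have n0: "n \<noteq> 0"
  proof
    assume "n = 0"
    then have e: "(q - 1) * q * (q + 1) = 1" using cop' by simp
    then have "(q + 1) dvd 1" by (metis dvd_triv_right)
    then have "q = 0" by simp
    then show False using e by simp
  qed
  have c1: "coprime n (q - 1)" and c2: "coprime n q" and c3: "coprime n (q + 1)"
    using cop' by (simp_all only: coprime_mult_right_iff)
  have "q^2 - 1 = (q - 1) * (q + 1)" by (cases q) (simp_all add: power2_eq_square algebra_simps)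
  moreover have "coprime n ((q - 1) * (q + 1))" using c1 c3 by (simp only: coprime_mult_right_iff)
  ultimately have c4: "coprime n (q^2 - 1)" by (simp only:)
  have UO: "U s d n \<in> Ov" by (rule U_Ov)
  have discO: "s^2 - 4 * d \<in> Ov" using sO dO Ov_numeral by (intro Ov_diff Ov_mult Ov_power) auto
  show ?thesis
  proof (cases "val v (s^2 - 4 * d) > 0")
    case True
    have vq: "val v (of_nat q :: 'a) > 0" using q_cg_0[OF fin] by (simp add: q_def)
    have vn: "val v (of_nat n :: 'a) = 0" by (rule val_nat_coprime[OF c2 vq])
    show ?thesis by (rule U_ramified[OF vd v2 True vn])
  next
    case False
    then have vdisc: "val v (s^2 - 4 * d) = 0" using discO by (simp add: Ov_iff)
    show ?thesis
    proof (cases "\<exists>\<rho>\<in>Ov. \<rho>^2 - s * \<rho> + d \<equiv>\<^sub>m 0")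
      case True
      then obtain \<rho> where r: "\<rho> \<in> Ov" "\<rho>^2 - s * \<rho> + d \<equiv>\<^sub>m 0" by blast
      have "\<not> U s d n \<equiv>\<^sub>m 0" using U_split[OF fin vd vdisc r(1) r(2) _ n0] c1 by (simp add: q_def)
      then show ?thesis using UO unit_cg by blast
    next
      case False
      have "\<not> U s d n \<equiv>\<^sub>m 0" using U_inert[OF fin vd _ _ n0] False c4 by (simp add: q_def)
      then show ?thesis using UO unit_cg by blast
    qed
  qed
qed

end

definition discr :: "'a::comm_ring_1^2^2 \<Rightarrow> 'a" where
  "discr g = (mtrace g)^2 - 4 * det g"

lemma mat2_eq: "(A::'a^2^2) = B \<longleftrightarrow> A$1$1 = B$1$1 \<and> A$1$2 = B$1$2 \<and> A$2$1 = B$2$1 \<and> A$2$2 = B$2$2"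
  by (auto simp: vec_eq_iff forall_2)

lemma mmul_entry: "((A::'a::comm_ring_1^2^2) ** B)$i$j = A$i$1 * B$1$j + A$i$2 * B$2$j"
  by (simp add: matrix_matrix_mult_def sum_2)

lemma mat_entry: "(mat c :: 'a::zero^2^2)$i$j = (if i = j then c else 0)"
  by (simp add: mat_def)

lemma mpow_Suc: "mpow g (Suc n) = mpow g n ** g"
  by (simp add: mpow_def)

lemma mpow_0: "mpow g 0 = mat 1"
  by (simp add: mpow_def)

lemma mpow_formula:
  fixes g :: "'a::comm_ring_1^2^2"
  shows "mpow g (Suc k) $ i $ j = U (mtrace g) (det g) (Suc k) * g$i$j - (if i = j then det g * U (mtrace g) (det g) k else 0)"
proof (induction k arbitrary: i j)
  case 0
  show ?case by (simp add: mpow_Suc mpow_0)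
next
  case (Suc k)
  let ?s = "mtrace g" and ?d = "det g"
  have CH: "(g ** g)$i$j = ?s * g$i$j - (if i = j then ?d else 0)" for i j
    using exhaust_2[of i] exhaust_2[of j]
    by (auto simp: mmul_entry mtrace_def det_2 algebra_simps)
  have "mpow g (Suc (Suc k)) $ i $ j = mpow g (Suc k) $ i $ 1 * g$1$j + mpow g (Suc k) $ i $ 2 * g$2$j"
    by (simp add: mpow_Suc[of g "Suc k"] mmul_entry)
  also have "\<dots> = U ?s ?d (Suc k) * (g ** g)$i$j - ?d * U ?s ?d k * g$i$j"
    unfolding Suc.IH using exhaust_2[of i] by (auto simp: mmul_entry algebra_simps)
  also have "\<dots> = U ?s ?d (Suc (Suc k)) * g$i$j - (if i = j then ?d * U ?s ?d (Suc k) else 0)"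
    by (simp add: CH algebra_simps)
  finally show ?case .
qed

lemma det_mpow: "det (mpow (g::'a::comm_ring_1^2^2) n) = det g ^ n"
  by (induction n) (simp_all add: mpow_0 mpow_Suc det_mul)

lemma U_cassini: "U s d (Suc k) ^ 2 - s * U s d (Suc k) * U s d k + d * U s d k ^ 2 = d ^ k"
proof (induction k)
  case 0 then show ?case by simp
next
  case (Suc k)
  have "U s d (Suc (Suc k)) ^ 2 - s * U s d (Suc (Suc k)) * U s d (Suc k) + d * U s d (Suc k) ^ 2
      = d * (U s d (Suc k) ^ 2 - s * U s d (Suc k) * U s d k + d * U s d k ^ 2)"
    by (simp add: power2_eq_square algebra_simps)
  then show ?case using Suc by simp
qed

lemma mtrace_mpow: "mtrace (mpow g (Suc k)) = U (mtrace g) (det g) (Suc k) * mtrace g - 2 * det g * U (mtrace g) (det g) k"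
  by (simp add: mtrace_def mpow_formula algebra_simps)

lemma discr_mpow: "discr (mpow g (Suc k)) = discr g * U (mtrace g) (det g) (Suc k) ^ 2"
proof -
  let ?s = "mtrace g" and ?d = "det g"
  let ?U' = "U ?s ?d (Suc k)" and ?U = "U ?s ?d k"
  have c: "?U' ^ 2 - ?s * ?U' * ?U + ?d * ?U ^ 2 = ?d ^ k" by (rule U_cassini)
  have "discr (mpow g (Suc k)) = (?U' * ?s - 2 * ?d * ?U)^2 - 4 * ?d ^ Suc k"
    by (simp add: discr_def mtrace_mpow det_mpow)
  also have "\<dots> = (?s^2 - 4 * ?d) * ?U'^2 + 4 * ?d * (?U' ^ 2 - ?s * ?U' * ?U + ?d * ?U ^ 2 - ?d ^ k)"
    by (simp add: power2_eq_square algebra_simps)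
  also have "\<dots> = discr g * ?U' ^ 2" using c by (simp add: discr_def)
  finally show ?thesis .
qed

lemma ereal_arm: "(x::ereal) \<le> y \<Longrightarrow> x + c \<le> y + c"
  by (rule add_right_mono)

context vfield begin

lemma E1:
  assumes h: "val v m + ereal ai \<ge> ereal aj + ereal r" and hx: "val v xj + ereal aj \<ge> N"
  shows "val v (m * xj) + ereal ai \<ge> N + ereal r"
proof (cases "m = 0 \<or> xj = 0")
  case True then show ?thesis by auto
next
  case False
  then have m: "val v m = ereal (v m)" and x: "val v xj = ereal (v xj)" by (auto simp: val_def)
  have mx: "val v (m * xj) = ereal (v m + v xj)" using False by (simp add: val_def vmult)
  from h m have h': "real_of_int (v m) + ai \<ge> aj + r" by simp
  from hx x have hx': "N \<le> ereal (real_of_int (v xj) + aj)" by simp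
  show ?thesis
  proof (cases N)
    case (real n)
    then show ?thesis using h' hx' mx by simp
  next
    case PInf then show ?thesis using hx' by simp
  next
    case MInf then show ?thesis by simp
  qed
qed

lemma E2:
  assumes "val v p + ereal a \<ge> C" and "val v q + ereal a \<ge> C"
  shows "val v (p + q) + ereal a \<ge> C"
proof -
  have "val v (p + q) \<ge> val v p \<or> val v (p + q) \<ge> val v q"
    using val_add[of p q] by (auto simp: min_def split: if_splits)
  then show ?thesis using assms ereal_arm order_trans by metis
qed

lemma bnorm_le1: "bnorm v a1 a2 x \<le> val v (x$1) + ereal a1" by (simp add: bnorm_def)
lemma bnorm_le2: "bnorm v a1 a2 x \<le> val v (x$2) + ereal a2" by (simp add: bnorm_def)

lemma mvec1: "((M::'a^2^2) *v x)$1 = M$1$1 * x$1 + M$1$2 * x$2"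
  by (simp add: matrix_vector_mult_def sum_2)
lemma mvec2: "((M::'a^2^2) *v x)$2 = M$2$1 * x$1 + M$2$2 * x$2"
  by (simp add: matrix_vector_mult_def sum_2)

lemma normG:
  assumes h11: "val v (M$1$1) + ereal a1 \<ge> ereal a1 + ereal r"
    and h12: "val v (M$1$2) + ereal a1 \<ge> ereal a2 + ereal r"
    and h21: "val v (M$2$1) + ereal a2 \<ge> ereal a1 + ereal r"
    and h22: "val v (M$2$2) + ereal a2 \<ge> ereal a2 + ereal r"
  shows "bnorm v a1 a2 ((M::'a^2^2) *v x) \<ge> bnorm v a1 a2 x + ereal r"
proof -
  let ?N = "bnorm v a1 a2 x"
  have c1: "val v ((M *v x)$1) + ereal a1 \<ge> ?N + ereal r"
    unfolding mvec1 by (intro E2 E1[OF h11 bnorm_le1] E1[OF h12 bnorm_le2])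
  have c2: "val v ((M *v x)$2) + ereal a2 \<ge> ?N + ereal r"
    unfolding mvec2 by (intro E2 E1[OF h21 bnorm_le1] E1[OF h22 bnorm_le2])
  show ?thesis using c1 c2 by (simp add: bnorm_def)
qed

lemma bnorm_add: "bnorm v a1 a2 (x + y) \<ge> min (bnorm v a1 a2 x) (bnorm v a1 a2 y)"
proof -
  let ?m = "min (bnorm v a1 a2 x) (bnorm v a1 a2 y)"
  have "val v ((x + y)$1) + ereal a1 \<ge> ?m"
    by (simp only: vector_add_component, rule E2) (meson bnorm_le1 min.coboundedI1 min.coboundedI2 order_trans)+
  moreover have "val v ((x + y)$2) + ereal a2 \<ge> ?m"
    by (simp only: vector_add_component, rule E2) (meson bnorm_le2 min.coboundedI1 min.coboundedI2 order_trans)+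
  ultimately show ?thesis by (simp add: bnorm_def)
qed

lemma bnorm_minus: "bnorm v a1 a2 (- x) = bnorm v a1 a2 x"
  by (simp add: bnorm_def)

lemma bnorm_not_minf: "bnorm v a1 a2 x \<noteq> - \<infinity>"
  by (simp add: bnorm_def min_def)

lemma normH:
  assumes h11: "val v (M$1$1) + ereal a1 \<ge> ereal a1 + ereal r"
    and h12: "val v (M$1$2) + ereal a1 \<ge> ereal a2 + ereal r"
    and h21: "val v (M$2$1) + ereal a2 \<ge> ereal a1 + ereal r"
    and h22: "val v (M$2$2) + ereal a2 \<ge> ereal a2 + ereal r"
    and r: "r > 0"
  shows "bnorm v a1 a2 (x + (M::'a^2^2) *v x) = bnorm v a1 a2 x"
proof -
  let ?N = "bnorm v a1 a2 x"
  have G: "bnorm v a1 a2 (M *v x) \<ge> ?N + ereal r" by (rule normG[OF h11 h12 h21 h22])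
  have NN: "?N \<le> ?N + ereal r" using r bnorm_not_minf[of a1 a2 x]
    by (cases ?N) auto
  have ge: "bnorm v a1 a2 (x + M *v x) \<ge> ?N"
    using bnorm_add[of a1 a2 x "M *v x"] G NN by (simp add: min_def split: if_splits)
  have "?N \<ge> min (bnorm v a1 a2 (x + M *v x)) (bnorm v a1 a2 (- (M *v x)))"
    using bnorm_add[of a1 a2 "x + M *v x" "- (M *v x)"] by simp
  then have "?N \<ge> bnorm v a1 a2 (x + M *v x) \<or> ?N \<ge> bnorm v a1 a2 (M *v x)"
    by (auto simp: bnorm_minus min_def split: if_splits)
  then have le: "?N \<ge> bnorm v a1 a2 (x + M *v x)"
  proof
    assume "?N \<ge> bnorm v a1 a2 (M *v x)"
    then have "?N \<ge> ?N + ereal r" using G by simp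
    then have "?N = \<infinity>" using r bnorm_not_minf[of a1 a2 x] by (cases ?N) auto
    then show ?thesis by simp
  qed
  show ?thesis using ge le by simp
qed

end

context vfield begin

lemma ereal_cancel: "val v m + ereal a \<ge> ereal b + ereal r \<Longrightarrow> val v m \<ge> ereal (b - a + r)"
  by (cases "val v m") auto

lemma VM: "val v x \<ge> ereal c \<Longrightarrow> val v y \<ge> ereal c' \<Longrightarrow> val v (x * y) \<ge> ereal (c + c')"
  using add_mono[of "ereal c" "val v x" "ereal c'" "val v y"] by (simp add: val_mult)

lemma VA: "val v x \<ge> C \<Longrightarrow> val v y \<ge> C \<Longrightarrow> val v (x + y) \<ge> C"
  using val_add[of x y] by (auto simp: min_def split: if_splits)

lemma VD: "val v x \<ge> C \<Longrightarrow> val v y \<ge> C \<Longrightarrow> val v (x - y) \<ge> C"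
  using VA[of C x "- y"] by simp

lemma V4: "val v (4 * x) \<ge> val v x"
proof -
  have "val v (4::'a) \<ge> 0" using Ov_numeral[of "num.Bit0 (num.Bit0 num.One)"] by (simp add: Ov_iff)
  then show ?thesis using add_mono[of 0 "val v (4::'a)" "val v x" "val v x"] by (simp add: val_mult)
qed

lemma trace2: "trace (A::'a^2^2) = A$1$1 + A$2$2"
  by (simp add: trace_def sum_2)

lemma UB:
  fixes g B :: "'a^2^2"
  assumes vd: "val v (det g) = 0" and dB: "det B \<noteq> 0" and r: "r > 0"
    and mem: "mat z ** g \<in> MP_filt v B a1 a2 r"
  shows "ereal (2 * r) \<le> val v (discr g)"
proof -
  obtain B' where BB': "B ** B' = mat 1" "B' ** B = mat 1"
    using dB invertible_det_nz[of B] unfolding invertible_def by blast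
  define h where "h = mat z ** g - mat 1"
  define M where "M = B' ** h ** B"
  have hB: "B ** M = h ** B" unfolding M_def using BB'(1)
    by (simp add: matrix_mul_assoc matrix_mul_lid)
  have raise: "\<And>x y. h *v (B *v x) = B *v y \<Longrightarrow> bnorm v a1 a2 y \<ge> bnorm v a1 a2 x + ereal r"
    using mem unfolding MP_filt_def h_def by blast
  have col: "min (val v (M$1$j) + ereal a1) (val v (M$2$j) + ereal a2) \<ge> (if j = 1 then ereal a1 else ereal a2) + ereal r" for j
  proof -
    define e where "e = (\<chi> i. if i = j then (1::'a) else 0)"
    have "h *v (B *v e) = B *v (M *v e)" by (simp add: matrix_vector_mul_assoc hB)
    then have "bnorm v a1 a2 (M *v e) \<ge> bnorm v a1 a2 e + ereal r" by (rule raise)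
    moreover have "bnorm v a1 a2 e = (if j = 1 then ereal a1 else ereal a2)"
      using exhaust_2[of j] by (auto simp: bnorm_def e_def)
    moreover have "(M *v e)$1 = M$1$j" "(M *v e)$2 = M$2$j"
      using exhaust_2[of j] by (auto simp: mvec1 mvec2 e_def)
    ultimately show ?thesis by (simp add: bnorm_def)
  qed
  have h11: "val v (M$1$1) \<ge> ereal r" using col[of 1] ereal_cancel[where m="M$1$1" and a=a1 and b=a1 and r=r] by simp
  have h21: "val v (M$2$1) \<ge> ereal (a1 - a2 + r)" using col[of 1] ereal_cancel[where m="M$2$1" and a=a2 and b=a1 and r=r] by simp
  have h12: "val v (M$1$2) \<ge> ereal (a2 - a1 + r)" using col[of 2] ereal_cancel[where m="M$1$2" and a=a1 and b=a2 and r=r] by simp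
  have h22: "val v (M$2$2) \<ge> ereal r" using col[of 2] ereal_cancel[where m="M$2$2" and a=a2 and b=a2 and r=r] by simp
  have p1: "val v (M$1$2 * M$2$1) \<ge> ereal (2 * r)"
    using VM[OF h12 h21] by simp
  have p2: "val v (M$1$1 * M$2$2) \<ge> ereal (2 * r)"
    using VM[OF h11 h22] by simp
  have dM: "val v (det M) \<ge> ereal (2 * r)" unfolding det_2 by (rule VD[OF p2 p1])
  have tM: "val v (trace M) \<ge> ereal r" unfolding trace2 by (rule VA[OF h11 h22])
  have "val v ((M$1$1 - M$2$2) * (M$1$1 - M$2$2)) \<ge> ereal (r + r)"
    by (intro VM VD h11 h22)
  then have q1: "val v ((M$1$1 - M$2$2)^2) \<ge> ereal (2 * r)" by (simp add: power2_eq_square)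
  have q2: "val v (4 * (M$1$2 * M$2$1)) \<ge> ereal (2 * r)" using V4 p1 order_trans by blast
  have discM: "val v ((M$1$1 - M$2$2)^2 + 4 * (M$1$2 * M$2$1)) \<ge> ereal (2 * r)" by (rule VA[OF q1 q2])
  have detM: "det M = det h"
  proof -
    have "det M = det B' * det h * det B" by (simp add: M_def det_mul)
    also have "\<dots> = det h * det (B' ** B)" by (simp add: det_mul)
    finally show ?thesis using BB'(2) by simp
  qed
  have trM: "trace M = trace h"
  proof -
    have "trace M = trace (B ** (B' ** h))" unfolding M_def by (rule trace_mul_sym)
    also have "\<dots> = trace h" by (simp add: matrix_mul_assoc BB'(1) matrix_mul_lid)
    finally show ?thesis .
  qed
  have hent: "h$i$j = z * g$i$j - (if i = j then 1 else 0)" for i j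
    using exhaust_2[of i] by (auto simp: h_def mmul_entry mat_entry)
  have e1: "(M$1$1 - M$2$2)^2 + 4 * (M$1$2 * M$2$1) = (trace M)^2 - 4 * det M"
    by (simp add: trace2 det_2 power2_eq_square algebra_simps)
  have e2: "(trace h)^2 - 4 * det h = z^2 * discr g"
    by (simp add: trace2 det_2 hent discr_def mtrace_def power2_eq_square algebra_simps)
  have e3: "z^2 * det g = 1 + (det h + trace h)"
    by (simp add: trace2 det_2 hent power2_eq_square algebra_simps)
  have pos: "val v (det h + trace h) > 0"
  proof -
    have "val v (det h) \<ge> ereal r" using dM detM r order_trans by (metis ereal_less_eq(3) linorder_not_le mult_2 less_add_same_cancel2 less_imp_le)
    then have "val v (det h + trace h) \<ge> ereal r" using VA tM trM by metis
    then show ?thesis using r by (meson ereal_less(2) less_le_trans)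
  qed
  have "val v (1 + (det h + trace h)) = val v 1" using pos by (intro val_add_strict) simp
  then have "val v (z^2 * det g) = 0" using e3 by simp
  then have vz: "val v (z^2) = 0" using vd by (simp add: val_mult)
  have "val v ((trace h)^2 - 4 * det h) \<ge> ereal (2 * r)" using discM e1 detM trM by simp
  then show ?thesis using e2 vz by (simp add: val_mult)
qed

end

context vfield begin

lemma MPmem:
  fixes g B M :: "'a^2^2"
  assumes z: "z \<noteq> 0" and dg: "det g \<noteq> 0" and dB: "det B \<noteq> 0"
    and hB: "(mat z ** g - mat 1) ** B = B ** M"
    and h11: "val v (M$1$1) + ereal a1 \<ge> ereal a1 + ereal r"
    and h12: "val v (M$1$2) + ereal a1 \<ge> ereal a2 + ereal r"
    and h21: "val v (M$2$1) + ereal a2 \<ge> ereal a1 + ereal r"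
    and h22: "val v (M$2$2) + ereal a2 \<ge> ereal a2 + ereal r"
    and r: "r > 0"
  shows "mat z ** g \<in> MP_filt v B a1 a2 r"
proof -
  obtain B' where BB': "B ** B' = mat 1" "B' ** B = mat 1"
    using dB invertible_det_nz[of B] unfolding invertible_def by blast
  have Binj: "B *v u = B *v w \<Longrightarrow> u = w" for u w
  proof -
    assume "B *v u = B *v w"
    then have "B' *v (B *v u) = B' *v (B *v w)" by simp
    then show "u = w" by (simp add: matrix_vector_mul_assoc BB'(2))
  qed
  let ?h = "mat z ** g - mat 1"
  have dz: "det (mat z ** g) \<noteq> 0"
  proof -
    have "det (mat z :: 'a^2^2) = z * z" by (simp add: det_2 mat_entry)
    then show ?thesis using z dg by (simp add: det_mul)
  qed
  have hx: "?h *v (B *v x) = B *v (M *v x)" for x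
    by (simp add: matrix_vector_mul_assoc hB)
  have A: "bnorm v a1 a2 y = bnorm v a1 a2 x" if e: "mat z ** g *v (B *v x) = B *v y" for x y
  proof -
    have "mat z ** g = ?h + mat 1" by simp
    then have "mat z ** g *v (B *v x) = ?h *v (B *v x) + B *v x"
      by (metis matrix_vector_mult_add_rdistrib matrix_vector_mul_lid)
    also have "\<dots> = B *v (x + M *v x)" by (simp add: hx matrix_vector_right_distrib add.commute)
    finally have "y = x + M *v x" using e Binj by metis
    then show ?thesis using normH[OF h11 h12 h21 h22 r] by simp
  qed
  have Bm: "bnorm v a1 a2 y \<ge> bnorm v a1 a2 x + ereal r" if e: "?h *v (B *v x) = B *v y" for x y
  proof -
    have "y = M *v x" using e hx Binj by metis
    then show ?thesis using normG[OF h11 h12 h21 h22] by simp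
  qed
  show ?thesis unfolding MP_filt_def using dz A Bm by blast
qed

lemma LB:
  fixes g :: "'a^2^2"
  assumes gO: "\<And>i j. g$i$j \<in> Ov" and vd: "val v (det g) = 0" and v2: "val v (2::'a) = 0"
    and vk: "val v (discr g) = ereal (real_of_int k)" and k1: "k \<ge> 1"
  shows "\<exists>z B a1 a2. z \<noteq> 0 \<and> det B \<noteq> 0 \<and> mat z ** g \<in> MP_filt v B a1 a2 (real_of_int k / 2)"
proof -
  define s where "s = mtrace g"
  define d where "d = det g"
  have sO: "s \<in> Ov" using gO by (simp add: s_def mtrace_def Ov_add)
  have two: "(2::'a) \<noteq> 0" using v2 by (auto simp: val_def)
  have v4: "val v (4::'a) = 0" using v2 val_mult[of "2::'a" 2] by simp
  have d0: "d \<noteq> 0" using vd by (auto simp: d_def val_def)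
  have vdisc: "val v (s^2 - 4 * d) > 0" using vk k1 by (simp add: discr_def s_def d_def)
  have v4d: "val v (4 * d) = 0" using v4 vd by (simp add: val_mult d_def)
  have "val v (4 * d + (s^2 - 4 * d)) = val v (4 * d)"
    using vdisc v4d by (intro val_add_strict) simp
  then have "val v (s^2) = 0" using v4d by simp
  moreover have "val v (s^2) = val v s + val v s" unfolding power2_eq_square by (rule val_mult)
  ultimately have "val v s + val v s = 0" by simp
  then have vs: "val v s = 0" by (rule ereal_double0)
  then have s0: "s \<noteq> 0" by (auto simp: val_def)
  define z where "z = 2 / s"
  have z0: "z \<noteq> 0" using two s0 by (simp add: z_def)
  have zs: "z * s = 2" using s0 by (simp add: z_def)
  have "val v z = val v 2 + val v (inverse s)" unfolding z_def divide_inverse by (rule val_mult)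
  also have "val v (inverse s) = - val v s" using s0 by (rule val_inverse)
  finally have vz: "val v z = 0" using v2 vs by simp
  define h where "h = mat z ** g - mat 1"
  have hent: "h$i$j = z * g$i$j - (if i = j then 1 else 0)" for i j
    using exhaust_2[of i] by (auto simp: h_def mmul_entry mat_entry)
  define \<alpha> where "\<alpha> = h$1$1"
  define \<beta> where "\<beta> = h$1$2"
  define \<gamma> where "\<gamma> = h$2$1"
  have h22: "h$2$2 = - \<alpha>" using zs by (simp add: \<alpha>_def hent s_def mtrace_def algebra_simps)
  define D where "D = \<alpha>^2 + \<beta> * \<gamma>"
  have zg22: "z * g$2$2 = 2 - z * g$1$1" using zs by (simp add: s_def mtrace_def algebra_simps)
  have R: "z^2 * (s^2 - 4 * d) = (z * g$1$1 - z * g$2$2)^2 + 4 * (z * g$1$2) * (z * g$2$1)"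
    by (simp add: s_def d_def mtrace_def det_2 power2_eq_square algebra_simps)
  have L: "4 * D = 4 * (z * g$1$1 - 1)^2 + 4 * (z * g$1$2) * (z * g$2$1)"
    by (simp add: D_def \<alpha>_def \<beta>_def \<gamma>_def hent power2_eq_square algebra_simps)
  have "(z * g$1$1 - z * g$2$2)^2 = 4 * (z * g$1$1 - 1)^2"
    unfolding zg22 by (simp add: power2_eq_square algebra_simps)
  then have e2: "4 * D = z^2 * (s^2 - 4 * d)" using R L by simp
  have vz2: "val v (z^2) = 0" using vz by (simp add: val_mult power2_eq_square)
  have "val v (4 * D) = ereal (real_of_int k)"
    using e2 vz2 vk by (simp add: val_mult discr_def s_def d_def)
  then have vD: "val v D = ereal (real_of_int k)" using v4 by (simp add: val_mult)
  then have D0: "D \<noteq> 0" by (auto simp: val_def)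
  have kD: "v D = k" using vD D0 by (simp add: val_def)
  define r where "r = real_of_int k / 2"
  have r0: "r > 0" using k1 by (simp add: r_def)
  show ?thesis
  proof (cases "\<gamma> = 0")
    case False
    define t where "t = \<alpha> / \<gamma>"
    define B :: "'a^2^2" where "B = (\<chi> i j. if i = j then 1 else if i = 1 then t else 0)"
    define \<beta>' where "\<beta>' = D / \<gamma>"
    define M :: "'a^2^2" where "M = (\<chi> i j. if i = j then 0 else if i = 1 then \<beta>' else \<gamma>)"
    have Bent: "B$1$1 = 1" "B$1$2 = t" "B$2$1 = 0" "B$2$2 = 1" by (simp_all add: B_def)
    have Ment: "M$1$1 = 0" "M$1$2 = \<beta>'" "M$2$1 = \<gamma>" "M$2$2 = 0" by (simp_all add: M_def)
    have dB: "det B \<noteq> 0" by (simp add: det_2 Bent)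
    have hB: "h ** B = B ** M"
      unfolding mat2_eq mmul_entry Bent Ment
      using False h22 by (simp add: \<alpha>_def[symmetric] \<beta>_def[symmetric] \<gamma>_def[symmetric] t_def \<beta>'_def D_def field_simps power2_eq_square)
    have b'0: "\<beta>' \<noteq> 0" using D0 False by (simp add: \<beta>'_def)
    have vb': "v \<beta>' = k - v \<gamma>" using D0 False kD vmult[of \<beta>' \<gamma>] b'0 by (simp add: \<beta>'_def)
    define a2 where "a2 = real_of_int (v \<beta>') - r"
    have c11: "val v (M$1$1) + ereal 0 \<ge> ereal 0 + ereal r" by (simp add: Ment)
    have c22: "val v (M$2$2) + ereal a2 \<ge> ereal a2 + ereal r" by (simp add: Ment)
    have c12: "val v (M$1$2) + ereal 0 \<ge> ereal a2 + ereal r" using b'0 by (simp add: Ment val_def a2_def)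
    have c21: "val v (M$2$1) + ereal a2 \<ge> ereal 0 + ereal r" using False vb'
      by (simp add: Ment val_def a2_def r_def)
    have "mat z ** g \<in> MP_filt v B 0 a2 r"
      by (rule MPmem[OF z0 _ dB _ c11 c12 c21 c22 r0]) (use d0 hB in \<open>simp_all add: d_def h_def\<close>)
    then show ?thesis using z0 dB unfolding r_def by blast
  next
    case True
    have "D = \<alpha>^2" using True by (simp add: D_def)
    then have "v (\<alpha>^2) = k" using kD by simp
    moreover have a0: "\<alpha> \<noteq> 0" using D0 True by (simp add: D_def)
    ultimately have va: "2 * v \<alpha> = k" using v_power[of \<alpha> 2] by simp
    define a1 where "a1 = r + \<bar>real_of_int (v \<beta>)\<bar>"
    have c11: "val v (h$1$1) + ereal a1 \<ge> ereal a1 + ereal r" using a0 va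
      by (simp add: \<alpha>_def[symmetric] val_def r_def)
    have c22: "val v (h$2$2) + ereal 0 \<ge> ereal 0 + ereal r" using a0 va h22
      by (simp add: val_def r_def vminus)
    have c21: "val v (h$2$1) + ereal 0 \<ge> ereal a1 + ereal r" using True by (simp add: \<gamma>_def[symmetric])
    have c12: "val v (h$1$2) + ereal a1 \<ge> ereal 0 + ereal r"
      by (simp add: \<beta>_def[symmetric] val_def a1_def, arith)
    have "mat z ** g \<in> MP_filt v (mat 1) a1 0 r"
      by (rule MPmem[OF z0 _ _ _ c11 c12 c21 c22 r0]) (use d0 in \<open>simp_all add: d_def h_def det_2 mat_entry\<close>)
    then show ?thesis using z0 unfolding r_def by (metis det_I one_neq_zero)
  qed
qed

end

context vfield begin

lemma max_depth_eq:
  fixes g :: "'a^2^2"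
  assumes gO: "\<And>i j. g$i$j \<in> Ov" and vd: "val v (det g) = 0" and v2: "val v (2::'a) = 0"
    and dn: "discr g \<noteq> 0"
  shows "max_depth v g = real_of_int (v (discr g)) / 2"
proof -
  define k where "k = v (discr g)"
  define c where "c = real_of_int k / 2"
  have vk: "val v (discr g) = ereal (real_of_int k)" using dn by (simp add: val_def k_def)
  have dO: "det g \<in> Ov" using vd by (simp add: Ov_iff)
  have discO: "discr g \<in> Ov" unfolding discr_def mtrace_def
    using gO dO Ov_numeral by (intro Ov_diff Ov_mult Ov_power Ov_add) auto
  have k0: "k \<ge> 0" using discO vk by (simp add: Ov_iff)
  have c0: "c \<ge> 0" using k0 by (simp add: c_def)
  define S where "S z = insert 0 {r. r \<ge> 0 \<and> (\<exists>B a1 a2. det B \<noteq> 0 \<and> mat z ** g \<in> MP_filt v B a1 a2 r)}" for z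
  have dep: "depth v (mat z ** g) = Sup (S z)" for z by (simp add: depth_def S_def)
  have Sb: "x \<le> c" if "x \<in> S z" for x z
  proof -
    from that consider "x = 0" | "x > 0" "\<exists>B a1 a2. det B \<noteq> 0 \<and> mat z ** g \<in> MP_filt v B a1 a2 x"
      by (cases "x = 0") (auto simp: S_def)
    then show ?thesis
    proof cases
      case 1 then show ?thesis using c0 by simp
    next
      case 2
      then obtain B a1 a2 where "det B \<noteq> 0" "mat z ** g \<in> MP_filt v B a1 a2 x" by blast
      then have "ereal (2 * x) \<le> val v (discr g)" using UB[OF vd _ 2(1)] by blast
      then show ?thesis using vk by (simp add: c_def)
    qed
  qed
  have bdd: "bdd_above (S z)" for z using Sb by (auto simp: bdd_above_def)
  have dle: "depth v (mat z ** g) \<le> c" for z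
    unfolding dep by (rule cSup_least) (auto simp: S_def Sb)
  have dge: "depth v (mat z ** g) \<ge> 0" for z
    unfolding dep by (rule cSup_upper[OF _ bdd]) (simp add: S_def)
  have attained: "\<exists>z. z \<noteq> 0 \<and> depth v (mat z ** g) = c"
  proof (cases "k \<ge> 1")
    case True
    obtain z B a1 a2 where z: "z \<noteq> 0" "det B \<noteq> 0" "mat z ** g \<in> MP_filt v B a1 a2 (real_of_int k / 2)"
      using LB[OF gO vd v2 vk True] by blast
    have "c \<in> S z" using z c0 by (auto simp: S_def c_def)
    then have "depth v (mat z ** g) \<ge> c" unfolding dep using bdd by (rule cSup_upper)
    then show ?thesis using dle z(1) by (intro exI[of _ z]) (simp add: antisym)
  next
    case False
    then have "c = 0" using k0 by (simp add: c_def)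
    then show ?thesis using dle[of 1] dge[of 1] by (intro exI[of _ 1]) simp
  qed
  have "Sup {depth v (mat z ** g) | z. z \<noteq> 0} = c"
    by (rule cSup_eq_maximum) (use attained dle in auto)
  then show ?thesis by (simp add: max_depth_def c_def k_def)
qed

end

theorem lemma3p13:
  fixes v :: "'a::field \<Rightarrow> int" and p q n :: nat and K :: "('a^2^2) set" and \<gamma> :: "'a^2^2"
  assumes "padic_field v p q"
    and "p \<noteq> 2"
    and "coprime n ((q - 1) * q * (q + 1))"
    and "K = GL2_O v \<or> K = Iwahori v"
    and "\<gamma> \<in> K"
    and "regular_semisimple \<gamma>"
  shows "max_depth v \<gamma> = max_depth v (mpow \<gamma> n) \<and> weyl_disc v q \<gamma> = weyl_disc v q (mpow \<gamma> n)"
proof -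
  note PF = assms(1)[unfolded padic_field_def]
  interpret vfield v using PF by unfold_locales auto
  have fin: "finite (residue_field v)" and cq: "card (residue_field v) = q"
    and pp: "prime p" and vp: "val v (of_nat p :: 'a) > 0" using PF by auto
  have cop2: "coprime 2 p" using pp assms(2) by (intro primes_coprime) auto
  have "val v (of_nat 2 :: 'a) = 0" by (rule val_nat_coprime[OF cop2 vp])
  then have v2: "val v (2::'a) = 0" by simp
  have gK: "\<gamma> \<in> GL2_O v" using assms(4,5) by (auto simp: Iwahori_def)
  then have gO: "\<And>i j. \<gamma>$i$j \<in> Ov" and vd: "val v (det \<gamma>) = 0" by (auto simp: GL2_O_def)
  have dn: "discr \<gamma> \<noteq> 0" using assms(6) by (simp add: regular_semisimple_def discr_def)
  define s where "s = mtrace \<gamma>"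
  define d where "d = det \<gamma>"
  have sO: "s \<in> Ov" using gO by (simp add: s_def mtrace_def Ov_add)
  have dO: "d \<in> Ov" using vd by (simp add: d_def Ov_iff)
  interpret vpair v s d by unfold_locales (use sO dO in auto)
  have n0: "n \<noteq> 0"
  proof
    assume "n = 0"
    then have e: "(q - 1) * q * (q + 1) = 1" using assms(3) by simp
    then have "(q + 1) dvd 1" by (metis dvd_triv_right)
    then have "q = 0" by simp
    then show False using e by simp
  qed
  then obtain k where nk: "n = Suc k" using not0_implies_Suc by blast
  have vU: "val v (U s d n) = 0"
    using U_unit[OF fin _ v2] vd assms(3) by (simp add: d_def cq)
  define g' where "g' = mpow \<gamma> n"
  have g'O: "g'$i$j \<in> Ov" for i j
    unfolding g'_def nk mpow_formula
    using gO dO U_Ov by (auto simp: s_def[symmetric] d_def[symmetric] intro!: Ov_diff Ov_mult)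
  have dg': "det g' = d ^ n" by (simp add: g'_def det_mpow d_def)
  have vd': "val v (det g') = 0" using vd by (simp add: dg' val_power0 d_def)
  have disc': "discr g' = discr \<gamma> * U s d n ^ 2" by (simp add: g'_def nk discr_mpow s_def d_def)
  have vU2: "val v (U s d n ^ 2) = 0" using vU by (simp add: val_power0)
  have vdisc: "val v (discr g') = val v (discr \<gamma>)" using vU2 by (simp add: disc' val_mult)
  have dn': "discr g' \<noteq> 0" using vdisc dn by (auto simp: val_def split: if_splits)
  have vv: "v (discr g') = v (discr \<gamma>)" using vdisc dn dn' by (simp add: val_def)
  have md: "max_depth v \<gamma> = max_depth v g'"
    using max_depth_eq[OF gO vd v2 dn] max_depth_eq[OF g'O vd' v2 dn'] vv by simp
  have w: "weyl_disc v q g = absv v q (discr g / det g)" for g :: "'a^2^2"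
    by (simp add: weyl_disc_def discr_def)
  have d0: "det \<gamma> \<noteq> 0" and d0': "det g' \<noteq> 0" using vd vd' by (auto simp: val_def split: if_splits)
  have "val v (discr g' / det g') = val v (discr \<gamma> / det \<gamma>)"
  proof -
    have "val v (discr g' / det g') = val v (discr g') + val v (inverse (det g'))"
      unfolding divide_inverse by (rule val_mult)
    also have "\<dots> = val v (discr \<gamma>)" using val_inverse[OF d0'] vd' vdisc by simp
    also have "\<dots> = val v (discr \<gamma>) + val v (inverse (det \<gamma>))" using val_inverse[OF d0] vd by simp
    also have "\<dots> = val v (discr \<gamma> / det \<gamma>)" unfolding divide_inverse by (rule val_mult[symmetric])
    finally show ?thesis .
  qed
  moreover have "discr g' / det g' \<noteq> 0" "discr \<gamma> / det \<gamma> \<noteq> 0" using dn dn' d0 d0' by auto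
  ultimately have "v (discr g' / det g') = v (discr \<gamma> / det \<gamma>)" by (simp add: val_def)
  then have "weyl_disc v q \<gamma> = weyl_disc v q g'"
    unfolding w absv_def using \<open>discr g' / det g' \<noteq> 0\<close> \<open>discr \<gamma> / det \<gamma> \<noteq> 0\<close> by simp
  then show ?thesis using md by (simp add: g'_def)
qed


end
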